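(* The constant curvature $\mathcal R$ of the Finsleroid Indicatrix $\{R\in V_N:K(g;R)=1\}$ (with the Riemannian metric induced by $g_{pq}(g;R)$) is related to the discriminant $D_{\{B\}}=g^2-4$ of the characteristic quadratic form $B=Z^2+gqZ+q^2$ (viewed as a quadratic form in $(Z,q)$) by $$\mathcal R=-\tfrac14 D_{\{B\}}=1-\tfrac14g^2=h^2 .$$
   Context: Let $N\ge2$, $V_N=\mathbb{R}^N$ with points $R=(R^1,\dots,R^N)$, $Z=R^N$; indices $a,b$ run over $1,\dots,N-1$, $p,q$ over $1,\dots,N$, repeated indices summed. Fix a symmetric positive-definite matrix $(r_{ab})$, $q(R)=\sqrt{r_{ab}R^aR^b}$. Fix $g\in(-2,2)$, $h=\sqrt{1-g^2/4}$, $G=g/h$. Define $B(g;R)=Z^2+gqZ+q^2$, $A(g;R)=Z+\frac12gq$, $\Phi(g;R)=\arctan(A/(hq))$ for $q>0$ ($\Phi=\pm\pi/2$ if $q=0$, $Z\gtrless0$), $J=e^{\frac12G\Phi}$, and the Finsleroid metric function $K(g;R)=\sqrt{B}\,J$. The Finsler metric tensor is $g_{pq}=\frac12\partial^2K^2/\partial R^p\partial R^q$. "Curvature $\mathcal R$" means the constant $\kappa$ with Riemann tensor $\kappa(\gamma_{ik}\gamma_{jl}-\gamma_{il}\gamma_{jk})$ for the induced metric $\gamma$. *)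

theory Defs
  imports "HOL-Analysis.Analysis"
begin

text \<open>Points of V_N are pairs (R', Z) with R' = (R^1..R^(N-1)) :: real^'m and Z = R^N,
  so N - 1 = CARD('m) and N \<ge> 2 automatically.\<close>

definition fq :: "real^'m^'m \<Rightarrow> ((real^'m) \<times> real) \<Rightarrow> real" where
  "fq r R = sqrt (fst R \<bullet> (r *v fst R))"

definition fh :: "real \<Rightarrow> real" where
  "fh g = sqrt (1 - g^2 / 4)"

definition fG :: "real \<Rightarrow> real" where
  "fG g = g / fh g"

definition fB :: "real \<Rightarrow> real^'m^'m \<Rightarrow> ((real^'m) \<times> real) \<Rightarrow> real" where
  "fB g r R = (snd R)^2 + g * fq r R * snd R + (fq r R)^2"

definition fA :: "real \<Rightarrow> real^'m^'m \<Rightarrow> ((real^'m) \<times> real) \<Rightarrow> real" where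
  "fA g r R = snd R + g * fq r R / 2"

definition fPhi :: "real \<Rightarrow> real^'m^'m \<Rightarrow> ((real^'m) \<times> real) \<Rightarrow> real" where
  "fPhi g r R = (if fq r R > 0 then arctan (fA g r R / (fh g * fq r R))
                 else if snd R \<ge> 0 then pi / 2 else - pi / 2)"

definition fJ :: "real \<Rightarrow> real^'m^'m \<Rightarrow> ((real^'m) \<times> real) \<Rightarrow> real" where
  "fJ g r R = exp (fG g / 2 * fPhi g r R)"

definition fK :: "real \<Rightarrow> real^'m^'m \<Rightarrow> ((real^'m) \<times> real) \<Rightarrow> real" where
  "fK g r R = sqrt (fB g r R) * fJ g r R"

definition finsler_g :: "real \<Rightarrow> real^'m^'m \<Rightarrow> ((real^'m) \<times> real) \<Rightarrow> ((real^'m) \<times> real)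
     \<Rightarrow> ((real^'m) \<times> real) \<Rightarrow> real" where
  "finsler_g g r R v w =
     (1/2) * deriv (\<lambda>s. deriv (\<lambda>t. (fK g r (R + t *\<^sub>R v + s *\<^sub>R w))^2) 0) 0"

definition pd :: "(real^'m \<Rightarrow> 'b::real_normed_vector) \<Rightarrow> 'm \<Rightarrow> real^'m \<Rightarrow> 'b" where
  "pd f i u = vector_derivative (\<lambda>t. f (u + t *\<^sub>R axis i 1)) (at 0)"

fun Ck :: "nat \<Rightarrow> (real^'m \<Rightarrow> 'b::real_normed_vector) \<Rightarrow> (real^'m) set \<Rightarrow> bool" where
  "Ck 0 f U = continuous_on U f"
| "Ck (Suc k) f U = (continuous_on U f \<and>
      (\<forall>i. \<forall>u\<in>U. (\<lambda>t. f (u + t *\<^sub>R axis i 1)) differentiable (at 0)) \<and>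
      (\<forall>i. Ck k (pd f i) U))"

definition smooth_on :: "(real^'m \<Rightarrow> 'b::real_normed_vector) \<Rightarrow> (real^'m) set \<Rightarrow> bool" where
  "smooth_on f U = (\<forall>k. Ck k f U)"

definition ind_metric :: "real \<Rightarrow> real^'m^'m \<Rightarrow> (real^'m \<Rightarrow> (real^'m) \<times> real) \<Rightarrow> real^'m \<Rightarrow> real^'m^'m" where
  "ind_metric g r \<phi> u = (\<chi> i j. finsler_g g r (\<phi> u) (pd \<phi> i u) (pd \<phi> j u))"

definition chr1 :: "real \<Rightarrow> real^'m^'m \<Rightarrow> (real^'m \<Rightarrow> (real^'m) \<times> real) \<Rightarrow> 'm \<Rightarrow> 'm \<Rightarrow> 'm \<Rightarrow> real^'m \<Rightarrow> real" where
  "chr1 g r \<phi> k i j u = (1/2) *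
     (pd (\<lambda>v. ind_metric g r \<phi> v $ j $ k) i u + pd (\<lambda>v. ind_metric g r \<phi> v $ i $ k) j u
      - pd (\<lambda>v. ind_metric g r \<phi> v $ i $ j) k u)"

definition chr2 :: "real \<Rightarrow> real^'m^'m \<Rightarrow> (real^'m \<Rightarrow> (real^'m) \<times> real) \<Rightarrow> 'm \<Rightarrow> 'm \<Rightarrow> 'm \<Rightarrow> real^'m \<Rightarrow> real" where
  "chr2 g r \<phi> l i j u = (\<Sum>k\<in>UNIV. matrix_inv (ind_metric g r \<phi> u) $ l $ k * chr1 g r \<phi> k i j u)"

text \<open>With this convention a space of constant (sectional) curvature kappa satisfies
  R_{ijkl} = kappa (gamma_ik gamma_jl - gamma_il gamma_jk) (e.g. kappa = 1 for the unit sphere).\<close>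
definition riem_up :: "real \<Rightarrow> real^'m^'m \<Rightarrow> (real^'m \<Rightarrow> (real^'m) \<times> real) \<Rightarrow> 'm \<Rightarrow> 'm \<Rightarrow> 'm \<Rightarrow> 'm \<Rightarrow> real^'m \<Rightarrow> real" where
  "riem_up g r \<phi> m j k l u =
     pd (chr2 g r \<phi> m l j) k u - pd (chr2 g r \<phi> m k j) l u
     + (\<Sum>p\<in>UNIV. chr2 g r \<phi> m k p u * chr2 g r \<phi> p l j u - chr2 g r \<phi> m l p u * chr2 g r \<phi> p k j u)"

definition riem :: "real \<Rightarrow> real^'m^'m \<Rightarrow> (real^'m \<Rightarrow> (real^'m) \<times> real) \<Rightarrow> 'm \<Rightarrow> 'm \<Rightarrow> 'm \<Rightarrow> 'm \<Rightarrow> real^'m \<Rightarrow> real" where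
  "riem g r \<phi> i j k l u = (\<Sum>m\<in>UNIV. ind_metric g r \<phi> u $ i $ m * riem_up g r \<phi> m j k l u)"

definition quad_disc :: "real \<Rightarrow> real \<Rightarrow> real \<Rightarrow> real" where
  "quad_disc a b c = b^2 - 4 * a * c"

end

theory Submission
  imports Defs
begin

lemma line_ev:
  fixes u :: "real^'m"
  assumes "open U" "u \<in> U"
  shows "eventually (\<lambda>t. u + t *\<^sub>R e \<in> U) (nhds (0::real))"
proof -
  have "continuous_on UNIV (\<lambda>t::real. u + t *\<^sub>R e)" by (intro continuous_intros)
  then have "open {t. u + t *\<^sub>R e \<in> U}"
    using open_vimage[OF assms(1)] by (simp add: vimage_def)
  moreover have "0 \<in> {t. u + t *\<^sub>R e \<in> U}" using assms by simp
  ultimately have "eventually (\<lambda>t. t \<in> {t. u + t *\<^sub>R e \<in> U}) (nhds (0::real))"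
    by (rule eventually_nhds_in_open)
  then show ?thesis by simp
qed

lemma hvd_cong_U:
  fixes u :: "real^'m"
  assumes "open U" "u \<in> U" "\<forall>v\<in>U. f v = f' v"
  shows "((\<lambda>t. f (u + t *\<^sub>R e)) has_vector_derivative D) (at 0) =
         ((\<lambda>t. f' (u + t *\<^sub>R e)) has_vector_derivative D) (at 0)"
  apply (rule has_vector_derivative_cong_ev)
  using line_ev[OF assms(1,2), of e] assms(2,3) by (auto elim!: eventually_mono)

lemma pd_cong:
  fixes u :: "real^'m"
  assumes "open U" "u \<in> U" "\<And>v. v \<in> U \<Longrightarrow> f v = f' v"
  shows "pd f i u = pd f' i u"
  unfolding pd_def vector_derivative_def using hvd_cong_U[of U u f f'] assms by simp

lemma pd_eqI:
  "((\<lambda>t. f (u + t *\<^sub>R axis i 1)) has_vector_derivative D) (at 0) \<Longrightarrow> pd f i u = D"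
  unfolding pd_def by (rule vector_derivative_at)

lemma Ck_hvd:
  assumes "Ck (Suc k) f U" "u \<in> U"
  shows "((\<lambda>t. f (u + t *\<^sub>R axis i 1)) has_vector_derivative pd f i u) (at 0)"
  using assms unfolding pd_def by (auto simp: vector_derivative_works[symmetric])

lemma Ck_cont: "Ck k f U \<Longrightarrow> continuous_on U f"
  by (cases k) auto

lemma Ck_mono: "Ck (Suc k) f U \<Longrightarrow> Ck k f U"
proof (induction k arbitrary: f)
  case 0 then show ?case by simp
next
  case (Suc k)
  then have "Ck k (pd f i) U" for i by simp
  with Suc.prems show ?case by simp
qed

lemma Ck_mono_le: "Ck k f U \<Longrightarrow> j \<le> k \<Longrightarrow> Ck j f U"
proof (induction k)
  case 0 then show ?case by simp
next
  case (Suc k) then show ?case using Ck_mono le_Suc_eq by blast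
qed

lemma Ck_cong:
  assumes "open U" "\<And>v. v \<in> U \<Longrightarrow> f v = f' v" "Ck k f U"
  shows "Ck k f' U"
  using assms(2,3)
proof (induction k arbitrary: f f')
  case 0 then show ?case using continuous_on_cong[of U U f f'] by simp
next
  case (Suc k)
  have c: "continuous_on U f'" using Suc continuous_on_cong[of U U f f'] by simp
  have d: "(\<lambda>t. f' (u + t *\<^sub>R axis i 1)) differentiable (at 0)" if "u \<in> U" for i u
    using Ck_hvd[OF Suc.prems(2) that, of i] hvd_cong_U[of U u f f' "axis i 1"] assms(1) that Suc.prems(1)
    by (auto intro: differentiableI_vector)
  have "Ck k (pd f' i) U" for i
    using Suc.IH[of "pd f i" "pd f' i"] Suc.prems pd_cong[of U _ f f'] assms(1) by auto
  with c d show ?case by simp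
qed

lemma Ck_const: "Ck k (\<lambda>u. c) U"
proof (induction k arbitrary: c)
  case 0 then show ?case by simp
next
  case (Suc k)
  have pd0: "pd (\<lambda>u. c) i = (\<lambda>u. 0)" for i
    by (rule ext, rule pd_eqI) simp
  have "Ck k (pd (\<lambda>u. c) i) U" for i unfolding pd0 by (rule Suc.IH)
  then show ?case by simp
qed

lemma Ck_add:
  assumes "open U"
  shows "Ck k f U \<Longrightarrow> Ck k g U \<Longrightarrow> Ck k (\<lambda>u. f u + g u) U"
proof (induction k arbitrary: f g)
  case 0 then show ?case by (simp add: continuous_on_add)
next
  case (Suc k)
  have hv: "((\<lambda>t. f (u + t *\<^sub>R axis i 1) + g (u + t *\<^sub>R axis i 1)) has_vector_derivative
     pd f i u + pd g i u) (at 0)" if "u \<in> U" for u i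
    using Ck_hvd[OF Suc.prems(1) that] Ck_hvd[OF Suc.prems(2) that] by (intro derivative_intros)
  have "Ck k (pd (\<lambda>u. f u + g u) i) U" for i
    apply (rule Ck_cong[OF assms, of "\<lambda>u. pd f i u + pd g i u"])
    using pd_eqI[OF hv] Suc by auto
  moreover have "continuous_on U (\<lambda>u. f u + g u)"
    using Suc.prems by (auto intro!: continuous_on_add dest: Ck_cont)
  ultimately show ?case using hv by (auto intro: differentiableI_vector)
qed

lemma Ck_linear:
  assumes "open U" "bounded_linear L"
  shows "Ck k f U \<Longrightarrow> Ck k (\<lambda>u. L (f u)) U"
proof (induction k arbitrary: f)
  case 0 then show ?case
    using continuous_on_compose2[OF linear_continuous_on[OF assms(2)] Ck_cont[OF 0] subset_UNIV] by simp
next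
  case (Suc k)
  have hv: "((\<lambda>t. L (f (u + t *\<^sub>R axis i 1))) has_vector_derivative L (pd f i u)) (at 0)"
    if "u \<in> U" for u i
    using bounded_linear.has_vector_derivative[OF assms(2) Ck_hvd[OF Suc.prems that]] .
  have "Ck k (pd (\<lambda>u. L (f u)) i) U" for i
    apply (rule Ck_cong[OF assms(1), of "\<lambda>u. L (pd f i u)"])
    using pd_eqI[OF hv] Suc by auto
  moreover have "continuous_on U (\<lambda>u. L (f u))"
    by (rule continuous_on_compose2[OF linear_continuous_on[OF assms(2)] Ck_cont[OF Suc.prems] subset_UNIV])
  ultimately show ?case using hv by (auto intro: differentiableI_vector)
qed

lemma Ck_bilinear:
  assumes "open U" "bounded_bilinear P"
  shows "Ck k f U \<Longrightarrow> Ck k g U \<Longrightarrow> Ck k (\<lambda>u. P (f u) (g u)) U"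
proof (induction k arbitrary: f g)
  case 0 then show ?case
    using bounded_bilinear.continuous_on[OF assms(2)] by simp
next
  case (Suc k)
  have hv: "((\<lambda>t. P (f (u + t *\<^sub>R axis i 1)) (g (u + t *\<^sub>R axis i 1))) has_vector_derivative
      P (f u) (pd g i u) + P (pd f i u) (g u)) (at 0)"
    if "u \<in> U" for u i
    using bounded_bilinear.has_vector_derivative[OF assms(2) Ck_hvd[OF Suc.prems(1) that] Ck_hvd[OF Suc.prems(2) that]]
    by simp
  have "Ck k (pd (\<lambda>u. P (f u) (g u)) i) U" for i
    apply (rule Ck_cong[OF assms(1), of "\<lambda>u. P (f u) (pd g i u) + P (pd f i u) (g u)"])
    using pd_eqI[OF hv] apply simp
    apply (rule Ck_add[OF assms(1)])
    apply (rule Suc.IH[OF Ck_mono[OF Suc.prems(1)]]) using Suc.prems(2) apply simp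
    apply (rule Suc.IH[OF _ Ck_mono[OF Suc.prems(2)]]) using Suc.prems(1) apply simp
    done
  moreover have "continuous_on U (\<lambda>u. P (f u) (g u))"
    using Suc.prems Ck_cont bounded_bilinear.continuous_on[OF assms(2)] by metis
  ultimately show ?case using hv by (auto intro: differentiableI_vector)
qed

lemmas Ck_mult = Ck_bilinear[OF _ bounded_bilinear_mult]
lemmas Ck_scaleR = Ck_bilinear[OF _ bounded_bilinear_scaleR]
lemmas Ck_inner = Ck_bilinear[OF _ bounded_bilinear_inner]

lemma Ck_pair:
  assumes "open U" "Ck k f U" "Ck k g U"
  shows "Ck k (\<lambda>u. (f u, g u)) U"
proof -
  have "Ck k (\<lambda>u. (f u, 0) + (0, g u)) U"
    apply (rule Ck_add[OF assms(1)])
    apply (rule Ck_linear[OF assms(1) _ assms(2)])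
    apply (simp add: bounded_linear_Pair bounded_linear_ident)
    apply (rule Ck_linear[OF assms(1) _ assms(3)])
    apply (simp add: bounded_linear_Pair bounded_linear_ident)
    done
  then show ?thesis by simp
qed

lemma Ck_inverse:
  assumes "open U"
  shows "(\<And>u. u \<in> U \<Longrightarrow> f u \<noteq> 0) \<Longrightarrow> Ck k f U \<Longrightarrow> Ck k (\<lambda>u. inverse (f u) :: real) U"
proof (induction k arbitrary: f)
  case 0 then show ?case by (auto intro!: continuous_on_inverse)
next
  case (Suc k)
  have hv: "((\<lambda>t. inverse (f (u + t *\<^sub>R axis i 1))) has_vector_derivative
      - (pd f i u * (inverse (f u) * inverse (f u)))) (at 0)"
    if "u \<in> U" for u i
  proof -
    have "((\<lambda>t. f (u + t *\<^sub>R axis i 1)) has_real_derivative pd f i u) (at 0)"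
      using Ck_hvd[OF Suc.prems(2) that] by (simp add: has_real_derivative_iff_has_vector_derivative)
    from DERIV_inverse_fun[OF this] Suc.prems(1)[OF that]
    show ?thesis by (simp add: has_real_derivative_iff_has_vector_derivative power2_eq_square)
  qed
  have IH: "Ck k (\<lambda>u. inverse (f u)) U" using Suc Ck_mono by blast
  have "Ck k (pd (\<lambda>u. inverse (f u)) i) U" for i
    apply (rule Ck_cong[OF assms(1), of "\<lambda>u. - (pd f i u * (inverse (f u) * inverse (f u)))"])
    using pd_eqI[OF hv] apply simp
    apply (rule Ck_linear[OF assms(1), of uminus])
    apply (simp add: bounded_linear_minus bounded_linear_ident)
    apply (rule Ck_mult[OF assms(1) _ Ck_mult[OF assms(1) IH IH]])
    using Suc by simp
  moreover have "continuous_on U (\<lambda>u. inverse (f u))"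
    using Suc.prems by (auto intro!: continuous_on_inverse dest: Ck_cont)
  ultimately show ?case using hv by (auto intro: differentiableI_vector)
qed

lemma Ck_sqrt:
  assumes "open U"
  shows "(\<And>u. u \<in> U \<Longrightarrow> f u > 0) \<Longrightarrow> Ck k f U \<Longrightarrow> Ck k (\<lambda>u. sqrt (f u)) U"
proof (induction k arbitrary: f)
  case 0 then show ?case by (auto intro!: continuous_on_real_sqrt)
next
  case (Suc k)
  have hv: "((\<lambda>t. sqrt (f (u + t *\<^sub>R axis i 1))) has_vector_derivative
      inverse (sqrt (f u)) / 2 * pd f i u) (at 0)"
    if "u \<in> U" for u i
  proof -
    have g: "((\<lambda>t. f (u + t *\<^sub>R axis i 1)) has_real_derivative pd f i u) (at 0)"
      using Ck_hvd[OF Suc.prems(2) that] by (simp add: has_real_derivative_iff_has_vector_derivative)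
    have s: "DERIV sqrt ((\<lambda>t. f (u + t *\<^sub>R axis i 1)) 0) :> inverse (sqrt (f u)) / 2"
      using DERIV_real_sqrt[OF Suc.prems(1)[OF that]] by simp
    have "((\<lambda>t. sqrt (f (u + t *\<^sub>R axis i 1))) has_real_derivative inverse (sqrt (f u)) / 2 * pd f i u) (at 0)"
      using DERIV_chain2[OF s g] by simp
    then
    show ?thesis by (simp add: has_real_derivative_iff_has_vector_derivative)
  qed
  have IH: "Ck k (\<lambda>u. sqrt (f u)) U" using Suc Ck_mono by blast
  have "Ck k (pd (\<lambda>u. sqrt (f u)) i) U" for i
    apply (rule Ck_cong[OF assms(1), of "\<lambda>u. inverse (sqrt (f u)) / 2 * pd f i u"])
    using pd_eqI[OF hv] apply simp
    apply (rule Ck_mult[OF assms(1)])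
    apply (rule Ck_linear[OF assms(1), of "\<lambda>x. x / 2"])
    apply (simp add: bounded_linear_divide)
    apply (rule Ck_inverse[OF assms(1)])
    using Suc.prems(1) apply (metis less_irrefl real_sqrt_gt_zero)
    apply (rule IH)
    using Suc by simp
  moreover have "continuous_on U (\<lambda>u. sqrt (f u))"
    using Suc.prems by (auto intro!: continuous_on_real_sqrt dest: Ck_cont)
  ultimately show ?case using hv by (auto intro: differentiableI_vector)
qed

lemma pd_linear:
  assumes "Ck (Suc k) f U" "u \<in> U" "bounded_linear L"
  shows "pd (\<lambda>v. L (f v)) i u = L (pd f i u)"
  by (rule pd_eqI, rule bounded_linear.has_vector_derivative[OF assms(3) Ck_hvd[OF assms(1,2)]])

lemma line_deriv_at:
  fixes f :: "real^'m \<Rightarrow> real"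
  assumes "Ck (Suc k) f U" "p + s0 *\<^sub>R axis i 1 \<in> U"
  shows "((\<lambda>s. f (p + s *\<^sub>R axis i 1)) has_real_derivative pd f i (p + s0 *\<^sub>R axis i 1)) (at s0)"
proof -
  have "((\<lambda>h. f ((p + s0 *\<^sub>R axis i 1) + h *\<^sub>R axis i 1)) has_real_derivative pd f i (p + s0 *\<^sub>R axis i 1)) (at 0)"
    using Ck_hvd[OF assms] by (simp add: has_real_derivative_iff_has_vector_derivative)
  moreover have "(\<lambda>h. f ((p + s0 *\<^sub>R axis i 1) + h *\<^sub>R axis i 1)) = (\<lambda>h. (\<lambda>s. f (p + s *\<^sub>R axis i 1)) (h + s0))"
    by (simp add: algebra_simps)
  ultimately show ?thesis using DERIV_shift[of "\<lambda>s. f (p + s *\<^sub>R axis i 1)" _ 0 s0] by simp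
qed

lemma mixed_limit:
  fixes f :: "real^'m \<Rightarrow> real"
  assumes U: "open U" and f: "Ck 2 f U" and u: "u \<in> U"
  shows "((\<lambda>t. (f (u + t *\<^sub>R axis j 1 + t *\<^sub>R axis i 1) - f (u + t *\<^sub>R axis i 1)
              - f (u + t *\<^sub>R axis j 1) + f u) / t\<^sup>2) \<longlongrightarrow> pd (pd f i) j u) (at_right 0)"
proof -
  define e1 where "e1 = (axis i 1 :: real^'m)"
  define e2 where "e2 = (axis j 1 :: real^'m)"
  have ne1: "norm e1 = 1" "norm e2 = 1" by (simp_all add: e1_def e2_def)
  obtain d where d: "d > 0" "cball u d \<subseteq> U" using U u open_contains_cball by blast
  have f1: "Ck (Suc 0) (pd f i) U" using f by (simp add: numeral_2_eq_2)
  have f0: "Ck (Suc 0) f U" using f Ck_mono by (simp add: numeral_2_eq_2)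
  have inU: "u + a *\<^sub>R e1 + b *\<^sub>R e2 \<in> U" if "\<bar>a\<bar> \<le> d/2" "\<bar>b\<bar> \<le> d/2" for a b
  proof -
    have "norm (a *\<^sub>R e1 + b *\<^sub>R e2) \<le> \<bar>a\<bar> + \<bar>b\<bar>"
      using norm_triangle_ineq[of "a *\<^sub>R e1" "b *\<^sub>R e2"] ne1 by simp
    moreover have "dist u (u + a *\<^sub>R e1 + b *\<^sub>R e2) = norm (a *\<^sub>R e1 + b *\<^sub>R e2)"
      using norm_minus_cancel[of "a *\<^sub>R e1 + b *\<^sub>R e2"] by (simp add: dist_norm add.assoc)
    ultimately have "dist u (u + a *\<^sub>R e1 + b *\<^sub>R e2) \<le> d" using that by simp
    then show ?thesis using d by auto
  qed
  have key: "\<exists>\<xi> \<eta>. 0 < \<xi> \<and> \<xi> < t \<and> 0 < \<eta> \<and> \<eta> < t \<and>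
     (f (u + t *\<^sub>R e2 + t *\<^sub>R e1) - f (u + t *\<^sub>R e1) - f (u + t *\<^sub>R e2) + f u) / t\<^sup>2
       = pd (pd f i) j (u + \<xi> *\<^sub>R e1 + \<eta> *\<^sub>R e2)"
    if t: "0 < t" "t \<le> d/2" for t
  proof -
    define g where "g s = f ((u + t *\<^sub>R e2) + s *\<^sub>R e1) - f (u + s *\<^sub>R e1)" for s
    have "DERIV g s :> pd f i ((u + t *\<^sub>R e2) + s *\<^sub>R e1) - pd f i (u + s *\<^sub>R e1)"
      if "0 \<le> s" "s \<le> t" for s
    proof -
      have a: "(u + t *\<^sub>R e2) + s *\<^sub>R e1 \<in> U" using inU[of s t] that t by (simp add: algebra_simps)
      have b: "u + s *\<^sub>R e1 \<in> U" using inU[of s 0] that t d by simp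
      show ?thesis unfolding g_def e1_def
        by (intro derivative_intros line_deriv_at[OF f0] ) (use a b in \<open>simp_all add: e1_def\<close>)
    qed
    from MVT2[OF t(1) this] obtain \<xi> where xi: "0 < \<xi>" "\<xi> < t"
      "g t - g 0 = (t - 0) * (pd f i ((u + t *\<^sub>R e2) + \<xi> *\<^sub>R e1) - pd f i (u + \<xi> *\<^sub>R e1))"
      by auto
    define h where "h s = pd f i ((u + \<xi> *\<^sub>R e1) + s *\<^sub>R e2)" for s
    have "DERIV h s :> pd (pd f i) j ((u + \<xi> *\<^sub>R e1) + s *\<^sub>R e2)" if "0 \<le> s" "s \<le> t" for s
    proof -
      have a: "(u + \<xi> *\<^sub>R e1) + s *\<^sub>R e2 \<in> U" using inU[of \<xi> s] that t xi by simp
      show ?thesis unfolding h_def e2_def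
        by (rule line_deriv_at[OF f1]) (use a in \<open>simp add: e2_def\<close>)
    qed
    from MVT2[OF t(1) this] obtain \<eta> where eta: "0 < \<eta>" "\<eta> < t"
      "h t - h 0 = (t - 0) * pd (pd f i) j ((u + \<xi> *\<^sub>R e1) + \<eta> *\<^sub>R e2)"
      by auto
    have "f (u + t *\<^sub>R e2 + t *\<^sub>R e1) - f (u + t *\<^sub>R e1) - f (u + t *\<^sub>R e2) + f u = g t - g 0"
      by (simp add: g_def)
    also have "\<dots> = t * (h t - h 0)" using xi(3) by (simp add: h_def algebra_simps)
    also have "\<dots> = t\<^sup>2 * pd (pd f i) j (u + \<xi> *\<^sub>R e1 + \<eta> *\<^sub>R e2)"
      using eta(3) by (simp add: power2_eq_square)
    finally have "(f (u + t *\<^sub>R e2 + t *\<^sub>R e1) - f (u + t *\<^sub>R e1) - f (u + t *\<^sub>R e2) + f u) / t\<^sup>2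
       = pd (pd f i) j (u + \<xi> *\<^sub>R e1 + \<eta> *\<^sub>R e2)" using t by simp
    then show ?thesis using xi(1,2) eta(1,2) by blast
  qed
  have cont: "continuous (at u) (pd (pd f i) j)"
  proof -
    have "Ck 0 (pd (pd f i) j) U" using f by (simp add: numeral_2_eq_2)
    then have "continuous_on U (pd (pd f i) j)" by simp
    then show ?thesis using U u continuous_on_eq_continuous_at by blast
  qed
  show ?thesis
    unfolding tendsto_iff
  proof (intro allI impI)
    fix \<epsilon> :: real assume "\<epsilon> > 0"
    with cont obtain d' where d': "d' > 0" "\<And>y. dist y u < d' \<Longrightarrow> dist (pd (pd f i) j y) (pd (pd f i) j u) < \<epsilon>"
      unfolding continuous_at_eps_delta by blast
    show "\<forall>\<^sub>F t in at_right 0. dist ((f (u + t *\<^sub>R axis j 1 + t *\<^sub>R axis i 1) - f (u + t *\<^sub>R axis i 1)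
              - f (u + t *\<^sub>R axis j 1) + f u) / t\<^sup>2) (pd (pd f i) j u) < \<epsilon>"
      unfolding eventually_at_right_field
    proof (intro exI[of _ "min (d/2) (d'/2)"] conjI allI impI)
      show "0 < min (d/2) (d'/2)" using d d' by simp
      fix t :: real assume t: "0 < t" "t < min (d/2) (d'/2)"
      then obtain \<xi> \<eta> where xe: "0 < \<xi>" "\<xi> < t" "0 < \<eta>" "\<eta> < t"
        "(f (u + t *\<^sub>R e2 + t *\<^sub>R e1) - f (u + t *\<^sub>R e1) - f (u + t *\<^sub>R e2) + f u) / t\<^sup>2
          = pd (pd f i) j (u + \<xi> *\<^sub>R e1 + \<eta> *\<^sub>R e2)"
        using key[of t] by auto
      have "norm (\<xi> *\<^sub>R e1 + \<eta> *\<^sub>R e2) \<le> \<xi> + \<eta>"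
        using norm_triangle_ineq[of "\<xi> *\<^sub>R e1" "\<eta> *\<^sub>R e2"] ne1 xe by simp
      moreover have "dist (u + \<xi> *\<^sub>R e1 + \<eta> *\<^sub>R e2) u = norm (\<xi> *\<^sub>R e1 + \<eta> *\<^sub>R e2)"
        by (simp add: dist_norm add.assoc)
      ultimately have "dist (u + \<xi> *\<^sub>R e1 + \<eta> *\<^sub>R e2) u < d'" using xe t by simp
      then show "dist ((f (u + t *\<^sub>R axis j 1 + t *\<^sub>R axis i 1) - f (u + t *\<^sub>R axis i 1)
              - f (u + t *\<^sub>R axis j 1) + f u) / t\<^sup>2) (pd (pd f i) j u) < \<epsilon>"
        using d'(2) xe(5) by (simp add: e1_def e2_def)
    qed
  qed
qed

lemma clairaut_real:
  fixes f :: "real^'m \<Rightarrow> real"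
  assumes U: "open U" and f: "Ck 2 f U" and u: "u \<in> U"
  shows "pd (pd f i) j u = pd (pd f j) i u"
proof -
  note l1 = mixed_limit[OF U f u, where i=i and j=j]
  note l2 = mixed_limit[OF U f u, where i=j and j=i]
  have "(\<lambda>t. (f (u + t *\<^sub>R axis i 1 + t *\<^sub>R axis j 1) - f (u + t *\<^sub>R axis j 1)
              - f (u + t *\<^sub>R axis i 1) + f u) / t\<^sup>2) =
        (\<lambda>t. (f (u + t *\<^sub>R axis j 1 + t *\<^sub>R axis i 1) - f (u + t *\<^sub>R axis i 1)
              - f (u + t *\<^sub>R axis j 1) + f u) / t\<^sup>2)"
    by (rule ext) (simp add: add.commute add.left_commute)
  with l2 have l2': "((\<lambda>t. (f (u + t *\<^sub>R axis j 1 + t *\<^sub>R axis i 1) - f (u + t *\<^sub>R axis i 1)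
              - f (u + t *\<^sub>R axis j 1) + f u) / t\<^sup>2) \<longlongrightarrow> pd (pd f j) i u) (at_right 0)" by simp
  show ?thesis by (rule tendsto_unique[OF trivial_limit_at_right_real l1 l2'])
qed

lemma clairaut:
  fixes f :: "real^'m \<Rightarrow> 'b::euclidean_space"
  assumes U: "open U" and f: "Ck 2 f U" and u: "u \<in> U"
  shows "pd (pd f i) j u = pd (pd f j) i u"
proof (rule euclidean_eqI)
  fix b :: 'b assume "b \<in> Basis"
  have L: "bounded_linear (\<lambda>x::'b. x \<bullet> b)" by (rule bounded_linear_inner_left)
  have fb: "Ck 2 (\<lambda>v. f v \<bullet> b) U" by (rule Ck_linear[OF U L f])
  have f1: "Ck (Suc 1) f U" using f by (simp add: numeral_2_eq_2)
  have fi: "Ck (Suc 0) (pd f i) U" "Ck (Suc 0) (pd f j) U" using f by (simp_all add: numeral_2_eq_2)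
  have e: "pd (pd (\<lambda>v. f v \<bullet> b) i) j u = pd (pd f i) j u \<bullet> b" for i j
  proof -
    have "pd (pd (\<lambda>v. f v \<bullet> b) i) j u = pd (\<lambda>v. pd f i v \<bullet> b) j u"
      by (rule pd_cong[OF U u]) (rule pd_linear[OF f1 _ L])
    also have "\<dots> = pd (pd f i) j u \<bullet> b"
      using f by (intro pd_linear[OF _ u L, of 0]) (simp add: numeral_2_eq_2)
    finally show ?thesis .
  qed
  show "pd (pd f i) j u \<bullet> b = pd (pd f j) i u \<bullet> b"
    using clairaut_real[OF U fb u, of i j] e by simp
qed

lemma differentiable_prod_fun:
  fixes f :: "'i \<Rightarrow> real \<Rightarrow> real"
  assumes "finite S" "\<And>a. a \<in> S \<Longrightarrow> f a differentiable (at x)"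
  shows "(\<lambda>t. \<Prod>a\<in>S. f a t) differentiable (at x)"
  using assms
proof (induction S rule: finite_induct)
  case empty then show ?case by simp
next
  case (insert a S)
  then show ?case by (simp add: differentiable_mult)
qed

lemma det_differentiable:
  fixes M :: "real \<Rightarrow> real^'n^'n"
  assumes "\<And>i j. (\<lambda>t. M t $ i $ j) differentiable (at x)"
  shows "(\<lambda>t. det (M t)) differentiable (at x)"
  unfolding det_def
  apply (rule differentiable_sum)
   apply (simp add: finite_permutations)
  apply (intro ballI differentiable_mult differentiable_const differentiable_prod_fun)
  using assms by auto

lemma matrix_inv_props:
  fixes A :: "real^'n^'n"
  assumes "invertible A"
  shows "A ** matrix_inv A = mat 1" "matrix_inv A ** A = mat 1"
proof -
  have "\<exists>A'. A ** A' = mat 1 \<and> A' ** A = mat 1" using assms by (simp add: invertible_def)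
  from someI_ex[OF this] show "A ** matrix_inv A = mat 1" "matrix_inv A ** A = mat 1"
    by (simp_all add: matrix_inv_def)
qed

lemma matrix_inv_cramer:
  fixes A :: "real^'n^'n"
  assumes "det A \<noteq> 0"
  shows "matrix_inv A $ l $ k = det (\<chi> i j. if j = l then axis k 1 $ i else A $ i $ j) / det A"
proof -
  have inv: "invertible A" using assms by (simp add: invertible_det_nz)
  have "A *v (matrix_inv A *v axis k 1) = axis k 1"
    by (simp add: matrix_vector_mul_assoc matrix_inv_props(1)[OF inv])
  then have "matrix_inv A *v axis k 1 = (\<chi> l. det (\<chi> i j. if j = l then axis k 1 $ i else A $ i $ j) / det A)"
    using cramer[OF assms] by blast
  moreover have "(matrix_inv A *v axis k 1) $ l = matrix_inv A $ l $ k"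
    by (simp add: matrix_vector_mult_basis column_def)
  ultimately show ?thesis by simp
qed

lemma differentiable_transform_ev:
  fixes f g :: "real \<Rightarrow> 'b::real_normed_vector"
  assumes "f differentiable (at x)" "eventually (\<lambda>t. f t = g t) (nhds x)"
  shows "g differentiable (at x)"
proof -
  obtain D where D: "(f has_derivative D) (at x)" using assms(1) by (auto simp: differentiable_def)
  obtain d where d: "d > 0" "\<And>y. dist y x < d \<Longrightarrow> f y = g y"
    using assms(2) unfolding eventually_nhds_metric by blast
  have "(g has_derivative D) (at x within UNIV)"
    by (rule has_derivative_transform_within[OF D[unfolded at_within_def[symmetric]] d(1)]) (use d in auto)
  then show ?thesis by (auto simp: differentiable_def)
qed

lemma minv_differentiable:
  fixes M :: "real \<Rightarrow> real^'n^'n"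
  assumes M: "\<And>i j. (\<lambda>t. M t $ i $ j) differentiable (at 0)" and d0: "det (M 0) \<noteq> 0"
  shows "(\<lambda>t. matrix_inv (M t) $ l $ k) differentiable (at 0)"
proof -
  have dd: "(\<lambda>t. det (M t)) differentiable (at 0)" by (rule det_differentiable[OF M])
  have dn: "(\<lambda>t. det (\<chi> i j. if j = l then axis k 1 $ i else M t $ i $ j)) differentiable (at 0)"
  proof (rule det_differentiable)
    fix i j
    show "(\<lambda>t. (\<chi> i j. if j = l then axis k 1 $ i else M t $ i $ j) $ i $ j) differentiable (at 0)"
      by (cases "j = l") (simp_all add: M)
  qed
  have q: "(\<lambda>t. det (\<chi> i j. if j = l then axis k 1 $ i else M t $ i $ j) / det (M t)) differentiable (at 0)"
    using dn dd d0 by (rule differentiable_divide)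
  have "isCont (\<lambda>t. det (M t)) 0" using dd by (rule differentiable_imp_continuous_within)
  from continuous_at_avoid[OF this d0] obtain e where e: "e > 0" "\<And>y. dist 0 y < e \<Longrightarrow> det (M y) \<noteq> 0"
    by blast
  have "eventually (\<lambda>t. det (M t) \<noteq> 0) (nhds 0)"
    unfolding eventually_nhds_metric using e by (auto simp: dist_commute)
  then have "eventually (\<lambda>t. det (\<chi> i j. if j = l then axis k 1 $ i else M t $ i $ j) / det (M t)
      = matrix_inv (M t) $ l $ k) (nhds 0)"
    by eventually_elim (simp add: matrix_inv_cramer)
  with q show ?thesis by (rule differentiable_transform_ev)
qed

definition chr1G :: "(real^'m \<Rightarrow> real^'m^'m) \<Rightarrow> 'm \<Rightarrow> 'm \<Rightarrow> 'm \<Rightarrow> real^'m \<Rightarrow> real" where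
  "chr1G Gm k i j u = (1/2) *
     (pd (\<lambda>v. Gm v $ j $ k) i u + pd (\<lambda>v. Gm v $ i $ k) j u - pd (\<lambda>v. Gm v $ i $ j) k u)"

definition chr2G :: "(real^'m \<Rightarrow> real^'m^'m) \<Rightarrow> 'm \<Rightarrow> 'm \<Rightarrow> 'm \<Rightarrow> real^'m \<Rightarrow> real" where
  "chr2G Gm l i j u = (\<Sum>k\<in>UNIV. matrix_inv (Gm u) $ l $ k * chr1G Gm k i j u)"

definition riem_upG :: "(real^'m \<Rightarrow> real^'m^'m) \<Rightarrow> 'm \<Rightarrow> 'm \<Rightarrow> 'm \<Rightarrow> 'm \<Rightarrow> real^'m \<Rightarrow> real" where
  "riem_upG Gm m j k l u =
     pd (chr2G Gm m l j) k u - pd (chr2G Gm m k j) l u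
     + (\<Sum>p\<in>UNIV. chr2G Gm m k p u * chr2G Gm p l j u - chr2G Gm m l p u * chr2G Gm p k j u)"

definition riemG :: "(real^'m \<Rightarrow> real^'m^'m) \<Rightarrow> 'm \<Rightarrow> 'm \<Rightarrow> 'm \<Rightarrow> 'm \<Rightarrow> real^'m \<Rightarrow> real" where
  "riemG Gm i j k l u = (\<Sum>m\<in>UNIV. Gm u $ i $ m * riem_upG Gm m j k l u)"

lemma riem_eq_riemG: "riem g r \<phi> = riemG (ind_metric g r \<phi>)"
proof -
  have c1: "chr1 g r \<phi> = chr1G (ind_metric g r \<phi>)" by (simp add: fun_eq_iff chr1_def chr1G_def)
  have c2: "chr2 g r \<phi> = chr2G (ind_metric g r \<phi>)" by (simp add: fun_eq_iff chr2_def chr2G_def c1)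
  have c3: "riem_up g r \<phi> = riem_upG (ind_metric g r \<phi>)" by (simp add: fun_eq_iff riem_up_def riem_upG_def c2)
  show ?thesis by (simp add: fun_eq_iff riem_def riemG_def c3)
qed

lemma Ck_diff:
  assumes "open U" "Ck k f U" "Ck k g U"
  shows "Ck k (\<lambda>u. f u - g u) U"
proof -
  have "Ck k (\<lambda>u. f u + - g u) U"
    by (rule Ck_add[OF assms(1,2) Ck_linear[OF assms(1) _ assms(3)]]) (simp add: bounded_linear_minus bounded_linear_ident)
  then show ?thesis by simp
qed

lemma pd_bil:
  assumes "Ck (Suc n) f U" "Ck (Suc n) g U" "u \<in> U" "bounded_bilinear P"
  shows "pd (\<lambda>v. P (f v) (g v)) i u = P (f u) (pd g i u) + P (pd f i u) (g u)"
proof -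
  have "((\<lambda>t. P (f (u + t *\<^sub>R axis i 1)) (g (u + t *\<^sub>R axis i 1))) has_vector_derivative
      P (f u) (pd g i u) + P (pd f i u) (g u)) (at 0)"
    using bounded_bilinear.has_vector_derivative[OF assms(4) Ck_hvd[OF assms(1,3)] Ck_hvd[OF assms(2,3)]]
    by simp
  then show ?thesis by (rule pd_eqI)
qed

lemma hvd_transfer:
  assumes "open U" "Ck (Suc n) f U" "u \<in> U" "\<And>v. v \<in> U \<Longrightarrow> f v = f' v"
  shows "((\<lambda>t. f' (u + t *\<^sub>R axis k 1)) has_vector_derivative pd f' k u) (at 0)"
proof -
  have "pd f k u = pd f' k u" using pd_cong[of U u f f' k] assms by auto
  with Ck_hvd[OF assms(2,3), of k] hvd_cong_U[of U u f f' "axis k 1"] assms show ?thesis by auto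
qed

lemma pd_const_U:
  assumes "open U" "u \<in> U" "\<And>v. v \<in> U \<Longrightarrow> f v = c"
  shows "pd f i u = 0"
proof -
  have "pd f i u = pd (\<lambda>v. c) i u" using pd_cong[of U u f "\<lambda>v. c" i] assms by auto
  also have "\<dots> = 0" by (rule pd_eqI) simp
  finally show ?thesis .
qed

locale gauss_setup =
  fixes U :: "(real^'m) set" and \<psi> :: "real^'m \<Rightarrow> (real^'m) \<times> real"
    and B :: "(real^'m) \<times> real \<Rightarrow> (real^'m) \<times> real \<Rightarrow> real" and c :: real
    and Gm :: "real^'m \<Rightarrow> real^'m^'m"
  assumes U: "open U" and psi: "Ck 3 \<psi> U" and B: "bounded_bilinear B"
    and Bsym: "\<And>x y. B x y = B y x" and Bpos: "\<And>x. x \<noteq> 0 \<Longrightarrow> B x x > 0"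
    and cpos: "c > 0" and const: "\<And>u. u \<in> U \<Longrightarrow> B (\<psi> u) (\<psi> u) = c"
    and indep: "\<And>u a. u \<in> U \<Longrightarrow> (\<Sum>i\<in>UNIV. a i *\<^sub>R pd \<psi> i u) = 0 \<Longrightarrow> \<forall>i. a i = 0"
    and Gm: "\<And>u. u \<in> U \<Longrightarrow> Gm u = (\<chi> i j. B (pd \<psi> i u) (pd \<psi> j u))"
begin

lemma C3: "Ck (Suc (Suc (Suc 0))) \<psi> U" using psi by (simp add: numeral_3_eq_3)
lemma C2: "Ck (Suc (Suc 0)) (pd \<psi> i) U" using C3 by simp
lemma C1: "Ck (Suc 0) (pd (pd \<psi> i) j) U" using C2 by simp
lemma C0: "Ck 0 (pd (pd (pd \<psi> i) j) k) U" using C1 by simp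
lemma C3': "Ck (Suc (Suc 0)) \<psi> U" using C3 Ck_mono by blast
lemma C2': "Ck (Suc 0) (pd \<psi> i) U" using C2 Ck_mono by blast
lemma C1': "Ck (Suc 0) \<psi> U" using C3' Ck_mono by blast

lemma Bl1: "B (x + y) z = B x z + B y z" by (rule bounded_bilinear.add_left[OF B])
lemma Bl2: "B (x - y) z = B x z - B y z" by (rule bounded_bilinear.diff_left[OF B])
lemma Bl3: "B (a *\<^sub>R x) z = a * B x z" using bounded_bilinear.scaleR_left[OF B] by simp
lemma Bl4: "B (sum f S) z = (\<Sum>s\<in>S. B (f s) z)" by (rule bounded_bilinear.sum_left[OF B])
lemma Bl5: "B z (x + y) = B z x + B z y" by (rule bounded_bilinear.add_right[OF B])
lemma Bl6: "B z (a *\<^sub>R x) = a * B z x" using bounded_bilinear.scaleR_right[OF B] by simp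
lemma Bl7: "B z (sum f S) = (\<Sum>s\<in>S. B z (f s))" by (rule bounded_bilinear.sum_right[OF B])
lemma Bl8: "B z (x - y) = B z x - B z y" by (rule bounded_bilinear.diff_right[OF B])
lemma Bl9: "B 0 z = 0" by (rule bounded_bilinear.zero_left[OF B])
lemma Bl10: "B z 0 = 0" by (rule bounded_bilinear.zero_right[OF B])
lemmas Bl = Bl1 Bl2 Bl3 Bl4 Bl5 Bl6 Bl7 Bl8 Bl9 Bl10

lemma sym2: "u \<in> U \<Longrightarrow> pd (pd \<psi> i) j u = pd (pd \<psi> j) i u"
proof -
  assume u: "u \<in> U"
  have "Ck 2 \<psi> U" using C3' by (simp add: numeral_2_eq_2)
  from clairaut[OF U this u] show ?thesis .
qed

lemma gent: "u \<in> U \<Longrightarrow> Gm u $ i $ j = B (pd \<psi> i u) (pd \<psi> j u)"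
  using Gm by simp

lemma gsym: "u \<in> U \<Longrightarrow> Gm u $ i $ j = Gm u $ j $ i"
  using gent Bsym by simp

lemma gCk: "Ck (Suc (Suc 0)) (\<lambda>v. B (pd \<psi> i v) (pd \<psi> j v)) U"
  by (rule Ck_bilinear[OF U B C2 C2])

lemma dG: "u \<in> U \<Longrightarrow> pd (\<lambda>v. Gm v $ i $ j) k u =
   B (pd \<psi> i u) (pd (pd \<psi> j) k u) + B (pd (pd \<psi> i) k u) (pd \<psi> j u)"
proof -
  assume u: "u \<in> U"
  have "pd (\<lambda>v. Gm v $ i $ j) k u = pd (\<lambda>v. B (pd \<psi> i v) (pd \<psi> j v)) k u"
    using pd_cong[of U u "\<lambda>v. Gm v $ i $ j" "\<lambda>v. B (pd \<psi> i v) (pd \<psi> j v)" k] U u gent by auto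
  also have "\<dots> = B (pd \<psi> i u) (pd (pd \<psi> j) k u) + B (pd (pd \<psi> i) k u) (pd \<psi> j u)"
    by (rule pd_bil[OF C2' C2' u B])
  finally show ?thesis .
qed

lemma chr1: "u \<in> U \<Longrightarrow> chr1G Gm k i j u = B (pd \<psi> k u) (pd (pd \<psi> i) j u)"
proof -
  assume u: "u \<in> U"
  show ?thesis
    unfolding chr1G_def dG[OF u] sym2[OF u, of k i] sym2[OF u, of j i] sym2[OF u, of k j]
    using Bsym[of "pd \<psi> j u" "pd (pd \<psi> i) k u"] Bsym[of "pd \<psi> i u" "pd (pd \<psi> j) k u"]
      Bsym[of "pd \<psi> k u" "pd (pd \<psi> i) j u"]
    by simp
qed

lemma orth1: "u \<in> U \<Longrightarrow> B (pd \<psi> i u) (\<psi> u) = 0"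
proof -
  assume u: "u \<in> U"
  have "pd (\<lambda>v. B (\<psi> v) (\<psi> v)) i u = 0" by (rule pd_const_U[OF U u const])
  moreover have "pd (\<lambda>v. B (\<psi> v) (\<psi> v)) i u = B (\<psi> u) (pd \<psi> i u) + B (pd \<psi> i u) (\<psi> u)"
    by (rule pd_bil[OF C1' C1' u B])
  ultimately show ?thesis using Bsym[of "\<psi> u" "pd \<psi> i u"] by simp
qed

lemma orth2: "u \<in> U \<Longrightarrow> B (pd (pd \<psi> i) j u) (\<psi> u) = - Gm u $ i $ j"
proof -
  assume u: "u \<in> U"
  have "pd (\<lambda>v. B (pd \<psi> i v) (\<psi> v)) j u = 0" by (rule pd_const_U[OF U u orth1])
  moreover have "pd (\<lambda>v. B (pd \<psi> i v) (\<psi> v)) j u = B (pd \<psi> i u) (pd \<psi> j u) + B (pd (pd \<psi> i) j u) (\<psi> u)"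
    by (rule pd_bil[OF C2' C1' u B])
  ultimately show ?thesis using gent[OF u] by simp
qed

lemma ginv: "u \<in> U \<Longrightarrow> invertible (Gm u)"
proof -
  assume u: "u \<in> U"
  have "x = 0" if x: "Gm u *v x = 0" for x
  proof -
    define w where "w = (\<Sum>j\<in>UNIV. x $ j *\<^sub>R pd \<psi> j u)"
    have "(Gm u *v x) $ i = B (pd \<psi> i u) w" for i
      by (simp add: matrix_vector_mult_def w_def Bl gent[OF u] mult.commute)
    then have hw: "B (pd \<psi> i u) w = 0" for i using x by simp
    have "B w w = (\<Sum>j\<in>UNIV. x $ j * B (pd \<psi> j u) w)"
      by (subst (1) w_def) (simp add: Bl)
    then have "B w w = 0" using hw by simp
    then have "w = 0" using Bpos[of w] by (cases "w = 0") auto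
    then have "\<forall>j. x $ j = 0" using indep[OF u, of "\<lambda>j. x $ j"] by (simp add: w_def)
    then show "x = 0" by (simp add: vec_eq_iff)
  qed
  then have "\<exists>B'. B' ** Gm u = mat 1" using matrix_left_invertible_ker by blast
  then show ?thesis using invertible_left_inverse by blast
qed

lemma span: "u \<in> U \<Longrightarrow> \<exists>a a0. y = (\<Sum>l\<in>UNIV. a $ l *\<^sub>R pd \<psi> l u) + a0 *\<^sub>R \<psi> u"
proof -
  assume u: "u \<in> U"
  define L where "L p = (\<Sum>l\<in>UNIV. fst p $ l *\<^sub>R pd \<psi> l u) + snd p *\<^sub>R \<psi> u" for p :: "(real^'m) \<times> real"
  have lin: "linear L"
    by (rule linearI) (simp_all add: L_def algebra_simps sum.distrib scaleR_sum_right)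
  have "p = 0" if "L p = 0" for p
  proof -
    have "B (L p) (\<psi> u) = 0" using that by (simp add: Bl)
    then have "snd p * c = 0"
      by (simp add: L_def Bl orth1[OF u] const[OF u])
    then have s: "snd p = 0" using cpos by simp
    then have "(\<Sum>l\<in>UNIV. fst p $ l *\<^sub>R pd \<psi> l u) = 0" using that by (simp add: L_def)
    then have "\<forall>l. fst p $ l = 0" using indep[OF u, of "\<lambda>l. fst p $ l"] by simp
    then have "fst p = 0" by (simp add: vec_eq_iff)
    with s show "p = 0" by (simp add: prod_eq_iff)
  qed
  then have "inj L" using linear_injective_0[OF lin] by blast
  then have "surj L" using linear_inj_imp_surj[OF lin] by blast
  then obtain p where "y = L p" by blast
  then show ?thesis unfolding L_def by blast
qed

lemma gauss: "u \<in> U \<Longrightarrow> pd (pd \<psi> i) j u = (\<Sum>l\<in>UNIV. chr2G Gm l i j u *\<^sub>R pd \<psi> l u) - (Gm u $ i $ j / c) *\<^sub>R \<psi> u"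
proof -
  assume u: "u \<in> U"
  obtain a a0 where a: "pd (pd \<psi> i) j u = (\<Sum>l\<in>UNIV. a $ l *\<^sub>R pd \<psi> l u) + a0 *\<^sub>R \<psi> u"
    using span[OF u] by blast
  have "B (pd (pd \<psi> i) j u) (\<psi> u) = a0 * c"
    unfolding a by (simp add: Bl orth1[OF u] const[OF u])
  then have a0: "a0 = - Gm u $ i $ j / c" using orth2[OF u, of i j] cpos by (simp add: field_simps)
  have "(Gm u *v a) $ p = chr1G Gm p i j u" for p
  proof -
    have "chr1G Gm p i j u = B (pd \<psi> p u) (pd (pd \<psi> i) j u)" by (rule chr1[OF u])
    also have "\<dots> = (\<Sum>l\<in>UNIV. a $ l * B (pd \<psi> p u) (pd \<psi> l u))"
      unfolding a using orth1[OF u, of p] by (simp add: Bl Bsym[of "pd \<psi> p u" "\<psi> u"])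
    also have "\<dots> = (Gm u *v a) $ p"
      by (simp add: matrix_vector_mult_def gent[OF u] mult.commute)
    finally show ?thesis by simp
  qed
  then have "Gm u *v a = (\<chi> p. chr1G Gm p i j u)" by (simp add: vec_eq_iff)
  then have "matrix_inv (Gm u) *v (Gm u *v a) = matrix_inv (Gm u) *v (\<chi> p. chr1G Gm p i j u)" by simp
  then have "a = matrix_inv (Gm u) *v (\<chi> p. chr1G Gm p i j u)"
    by (simp add: matrix_vector_mul_assoc matrix_inv_props(2)[OF ginv[OF u]])
  then have "a $ l = chr2G Gm l i j u" for l
    by (simp add: chr2G_def matrix_vector_mult_def)
  then show ?thesis using a a0 by simp
qed

lemma chr2sym: "u \<in> U \<Longrightarrow> chr2G Gm l i j u = chr2G Gm l j i u"
  unfolding chr2G_def using chr1 sym2 by simp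

end

context gauss_setup begin

lemma orth1': "u \<in> U \<Longrightarrow> B (\<psi> u) (pd \<psi> i u) = 0"
  using orth1 Bsym by metis

lemma Gm_hvd: "u \<in> U \<Longrightarrow> ((\<lambda>t. Gm (u + t *\<^sub>R axis k 1) $ i $ j) has_vector_derivative pd (\<lambda>v. Gm v $ i $ j) k u) (at 0)"
  by (rule hvd_transfer[OF U gCk]) (auto simp: gent)

definition "gB a b = (\<lambda>v. B (pd \<psi> a v) (pd \<psi> b v))"

lemma chr1_fun: "v \<in> U \<Longrightarrow> chr1G Gm k i j v = (1/2) * (pd (gB j k) i v + pd (gB i k) j v - pd (gB i j) k v)"
proof -
  assume v: "v \<in> U"
  have e: "pd (\<lambda>v. Gm v $ a $ b) d v = pd (gB a b) d v" for a b d
    using pd_cong[of U v "\<lambda>v. Gm v $ a $ b" "gB a b" d] U v gent by (auto simp: gB_def)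
  show ?thesis unfolding chr1G_def e ..
qed

lemma gB_Ck: "Ck (Suc 0) (pd (gB a b) d) U"
  using gCk[of a b] by (simp add: gB_def)

lemma chr1_Ck: "Ck (Suc 0) (\<lambda>v. (1/2) * (pd (gB j k) i v + pd (gB i k) j v - pd (gB i j) k v)) U"
  by (intro Ck_mult[OF U Ck_const] Ck_diff[OF U] Ck_add[OF U] gB_Ck)

lemma chr1_hvd: "u \<in> U \<Longrightarrow> ((\<lambda>t. chr1G Gm k' i j (u + t *\<^sub>R axis k 1)) has_vector_derivative pd (chr1G Gm k' i j) k u) (at 0)"
  by (rule hvd_transfer[OF U chr1_Ck]) (auto simp: chr1_fun)

lemma chr2_diff: "u \<in> U \<Longrightarrow> (\<lambda>t. chr2G Gm l i j (u + t *\<^sub>R axis k 1)) differentiable (at 0)"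
proof -
  assume u: "u \<in> U"
  have M: "(\<lambda>t. Gm (u + t *\<^sub>R axis k 1) $ a $ b) differentiable (at 0)" for a b
    using Gm_hvd[OF u] by (rule differentiableI_vector)
  have d0: "det (Gm (u + 0 *\<^sub>R axis k 1)) \<noteq> 0" using ginv[OF u] by (simp add: invertible_det_nz)
  have mi: "(\<lambda>t. matrix_inv (Gm (u + t *\<^sub>R axis k 1)) $ l $ k') differentiable (at 0)" for k'
    using minv_differentiable[of "\<lambda>t. Gm (u + t *\<^sub>R axis k 1)", OF M d0] by simp
  have c1: "(\<lambda>t. chr1G Gm k' i j (u + t *\<^sub>R axis k 1)) differentiable (at 0)" for k'
    using chr1_hvd[OF u] by (rule differentiableI_vector)
  show ?thesis unfolding chr2G_def
    by (intro differentiable_sum ballI differentiable_mult mi c1) simp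
qed

lemma chr2_real: "u \<in> U \<Longrightarrow> ((\<lambda>t. chr2G Gm l i j (u + t *\<^sub>R axis k 1)) has_real_derivative pd (chr2G Gm l i j) k u) (at 0)"
  using chr2_diff unfolding pd_def has_real_derivative_iff_has_vector_derivative
  by (simp add: vector_derivative_works[symmetric])

lemma third: "u \<in> U \<Longrightarrow> pd (pd (pd \<psi> i) j) k u =
   (\<Sum>l\<in>UNIV. chr2G Gm l i j u *\<^sub>R pd (pd \<psi> l) k u + pd (chr2G Gm l i j) k u *\<^sub>R pd \<psi> l u)
   - ((Gm u $ i $ j / c) *\<^sub>R pd \<psi> k u + (pd (\<lambda>v. Gm v $ i $ j) k u / c) *\<^sub>R \<psi> u)"
proof -
  assume u: "u \<in> U"
  define T where "T v = (\<Sum>l\<in>UNIV. chr2G Gm l i j v *\<^sub>R pd \<psi> l v) - (Gm v $ i $ j / c) *\<^sub>R \<psi> v" for v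
  have "pd (pd (pd \<psi> i) j) k u = pd T k u"
    using pd_cong[of U u "pd (pd \<psi> i) j" T k] U u gauss by (auto simp: T_def)
  also have "\<dots> = (\<Sum>l\<in>UNIV. chr2G Gm l i j u *\<^sub>R pd (pd \<psi> l) k u + pd (chr2G Gm l i j) k u *\<^sub>R pd \<psi> l u)
   - ((Gm u $ i $ j / c) *\<^sub>R pd \<psi> k u + (pd (\<lambda>v. Gm v $ i $ j) k u / c) *\<^sub>R \<psi> u)"
  proof (rule pd_eqI)
    have h1: "((\<lambda>t. chr2G Gm l i j (u + t *\<^sub>R axis k 1) *\<^sub>R pd \<psi> l (u + t *\<^sub>R axis k 1)) has_vector_derivative
       (chr2G Gm l i j u *\<^sub>R pd (pd \<psi> l) k u + pd (chr2G Gm l i j) k u *\<^sub>R pd \<psi> l u)) (at 0)" for l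
      using has_vector_derivative_scaleR[OF chr2_real[OF u] Ck_hvd[OF C2' u]] by simp
    have gr: "((\<lambda>t. Gm (u + t *\<^sub>R axis k 1) $ i $ j / c) has_real_derivative pd (\<lambda>v. Gm v $ i $ j) k u / c) (at 0)"
      using Gm_hvd[OF u] unfolding has_real_derivative_iff_has_vector_derivative[symmetric]
      by (rule DERIV_cdivide)
    have h2: "((\<lambda>t. (Gm (u + t *\<^sub>R axis k 1) $ i $ j / c) *\<^sub>R \<psi> (u + t *\<^sub>R axis k 1)) has_vector_derivative
       ((Gm u $ i $ j / c) *\<^sub>R pd \<psi> k u + (pd (\<lambda>v. Gm v $ i $ j) k u / c) *\<^sub>R \<psi> u)) (at 0)"
      using has_vector_derivative_scaleR[OF gr Ck_hvd[OF C1' u]] by simp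
    show "((\<lambda>t. T (u + t *\<^sub>R axis k 1)) has_vector_derivative
      (\<Sum>l\<in>UNIV. chr2G Gm l i j u *\<^sub>R pd (pd \<psi> l) k u + pd (chr2G Gm l i j) k u *\<^sub>R pd \<psi> l u)
       - ((Gm u $ i $ j / c) *\<^sub>R pd \<psi> k u + (pd (\<lambda>v. Gm v $ i $ j) k u / c) *\<^sub>R \<psi> u)) (at 0)"
      unfolding T_def by (intro has_vector_derivative_diff has_vector_derivative_sum h1 h2)
  qed
  finally show ?thesis .
qed

lemma Bsecond: "u \<in> U \<Longrightarrow> B (pd (pd \<psi> l) k u) (pd \<psi> p u) = (\<Sum>q\<in>UNIV. chr2G Gm q l k u * Gm u $ q $ p)"
proof -
  assume u: "u \<in> U"
  show ?thesis unfolding gauss[OF u] by (simp add: Bl orth1'[OF u] gent[OF u])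
qed

lemma Bthird: "u \<in> U \<Longrightarrow> B (pd (pd (pd \<psi> i) j) k u) (pd \<psi> p u) =
   (\<Sum>l\<in>UNIV. chr2G Gm l i j u * (\<Sum>q\<in>UNIV. chr2G Gm q l k u * Gm u $ q $ p)
       + pd (chr2G Gm l i j) k u * Gm u $ l $ p) - (Gm u $ i $ j / c) * Gm u $ k $ p"
proof -
  assume u: "u \<in> U"
  show ?thesis unfolding third[OF u] by (simp add: Bl orth1'[OF u] Bsecond[OF u] gent[OF u])
qed

lemma sym3: "u \<in> U \<Longrightarrow> pd (pd (pd \<psi> l) j) k u = pd (pd (pd \<psi> k) j) l u"
proof -
  assume u: "u \<in> U"
  have "pd (pd (pd \<psi> l) j) k u = pd (pd (pd \<psi> j) l) k u"
    using pd_cong[of U u "pd (pd \<psi> l) j" "pd (pd \<psi> j) l" k] U u sym2 by auto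
  also have "\<dots> = pd (pd (pd \<psi> j) k) l u"
  proof -
    have "Ck 2 (pd \<psi> j) U" using C2 by (simp add: numeral_2_eq_2)
    from clairaut[OF U this u] show ?thesis .
  qed
  also have "\<dots> = pd (pd (pd \<psi> k) j) l u"
    using pd_cong[of U u "pd (pd \<psi> j) k" "pd (pd \<psi> k) j" l] U u sym2 by auto
  finally show ?thesis .
qed

lemma riem_main: "u \<in> U \<Longrightarrow> riemG Gm i j k l u = (1/c) * (Gm u $ i $ k * Gm u $ j $ l - Gm u $ i $ l * Gm u $ j $ k)"
proof -
  assume u: "u \<in> U"
  define \<Gamma> where "\<Gamma> a b d = chr2G Gm a b d u" for a b d
  define d\<Gamma> where "d\<Gamma> a b d e = pd (chr2G Gm a b d) e u" for a b d e
  define \<gamma> where "\<gamma> a b = Gm u $ a $ b" for a b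
  have gs: "\<gamma> a b = \<gamma> b a" for a b unfolding \<gamma>_def by (rule gsym[OF u])
  have Gs: "\<Gamma> a b d = \<Gamma> a d b" for a b d unfolding \<Gamma>_def by (rule chr2sym[OF u])
  define A1 where "A1 = (\<Sum>m\<in>UNIV. \<Gamma> m l j * (\<Sum>q\<in>UNIV. \<Gamma> q m k * \<gamma> q i))"
  define A2 where "A2 = (\<Sum>m\<in>UNIV. \<Gamma> m k j * (\<Sum>q\<in>UNIV. \<Gamma> q m l * \<gamma> q i))"
  define D1 where "D1 = (\<Sum>m\<in>UNIV. d\<Gamma> m l j k * \<gamma> m i)"
  define D2 where "D2 = (\<Sum>m\<in>UNIV. d\<Gamma> m k j l * \<gamma> m i)"
  have E1: "B (pd (pd (pd \<psi> l) j) k u) (pd \<psi> i u) = A1 + D1 - (\<gamma> l j / c) * \<gamma> k i"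
    unfolding Bthird[OF u] A1_def D1_def \<Gamma>_def d\<Gamma>_def \<gamma>_def by (simp add: sum.distrib)
  have E2: "B (pd (pd (pd \<psi> k) j) l u) (pd \<psi> i u) = A2 + D2 - (\<gamma> k j / c) * \<gamma> l i"
    unfolding Bthird[OF u] A2_def D2_def \<Gamma>_def d\<Gamma>_def \<gamma>_def by (simp add: sum.distrib)
  have E: "A1 + D1 - (\<gamma> l j / c) * \<gamma> k i = A2 + D2 - (\<gamma> k j / c) * \<gamma> l i"
    using E1 E2 sym3[OF u] by simp
  have S1: "(\<Sum>m\<in>UNIV. \<gamma> i m * (\<Sum>p\<in>UNIV. \<Gamma> m k p * \<Gamma> p l j)) = A1"
  proof -
    have "(\<Sum>m\<in>UNIV. \<gamma> i m * (\<Sum>p\<in>UNIV. \<Gamma> m k p * \<Gamma> p l j)) = (\<Sum>m\<in>UNIV. \<Sum>p\<in>UNIV. \<gamma> i m * \<Gamma> m k p * \<Gamma> p l j)"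
      by (simp add: sum_distrib_left mult.assoc)
    also have "\<dots> = (\<Sum>p\<in>UNIV. \<Sum>m\<in>UNIV. \<gamma> i m * \<Gamma> m k p * \<Gamma> p l j)" by (rule sum.swap)
    also have "\<dots> = (\<Sum>p\<in>UNIV. \<Sum>m\<in>UNIV. \<Gamma> p l j * (\<Gamma> m p k * \<gamma> m i))"
      by (intro sum.cong refl) (simp add: gs[of i] Gs[of _ k])
    also have "\<dots> = A1" unfolding A1_def by (simp add: sum_distrib_left)
    finally show ?thesis .
  qed
  have S2: "(\<Sum>m\<in>UNIV. \<gamma> i m * (\<Sum>p\<in>UNIV. \<Gamma> m l p * \<Gamma> p k j)) = A2"
  proof -
    have "(\<Sum>m\<in>UNIV. \<gamma> i m * (\<Sum>p\<in>UNIV. \<Gamma> m l p * \<Gamma> p k j)) = (\<Sum>m\<in>UNIV. \<Sum>p\<in>UNIV. \<gamma> i m * \<Gamma> m l p * \<Gamma> p k j)"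
      by (simp add: sum_distrib_left mult.assoc)
    also have "\<dots> = (\<Sum>p\<in>UNIV. \<Sum>m\<in>UNIV. \<gamma> i m * \<Gamma> m l p * \<Gamma> p k j)" by (rule sum.swap)
    also have "\<dots> = (\<Sum>p\<in>UNIV. \<Sum>m\<in>UNIV. \<Gamma> p k j * (\<Gamma> m p l * \<gamma> m i))"
      by (intro sum.cong refl) (simp add: gs[of i] Gs[of _ l])
    also have "\<dots> = A2" unfolding A2_def by (simp add: sum_distrib_left)
    finally show ?thesis .
  qed
  have "riemG Gm i j k l u = (\<Sum>m\<in>UNIV. \<gamma> i m * (d\<Gamma> m l j k - d\<Gamma> m k j l
      + (\<Sum>p\<in>UNIV. \<Gamma> m k p * \<Gamma> p l j - \<Gamma> m l p * \<Gamma> p k j)))"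
    unfolding riemG_def riem_upG_def \<gamma>_def d\<Gamma>_def \<Gamma>_def ..
  also have "\<dots> = D1 - D2 + ((\<Sum>m\<in>UNIV. \<gamma> i m * (\<Sum>p\<in>UNIV. \<Gamma> m k p * \<Gamma> p l j))
        - (\<Sum>m\<in>UNIV. \<gamma> i m * (\<Sum>p\<in>UNIV. \<Gamma> m l p * \<Gamma> p k j)))"
    unfolding D1_def D2_def
    by (simp add: algebra_simps sum.distrib sum_subtractf sum_distrib_left gs[of i])
  also have "\<dots> = D1 - D2 + A1 - A2" by (simp add: S1 S2)
  also have "\<dots> = (\<gamma> l j * \<gamma> k i - \<gamma> k j * \<gamma> l i) / c"
    using E by (simp add: diff_divide_distrib algebra_simps)
  also have "\<dots> = (1/c) * (Gm u $ i $ k * Gm u $ j $ l - Gm u $ i $ l * Gm u $ j $ k)"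
    unfolding \<gamma>_def using gsym[OF u] by (simp add: field_simps)
  finally show ?thesis .
qed

end

definition BBs :: "real \<Rightarrow> real \<Rightarrow> real \<Rightarrow> real" where "BBs g q z = z\<^sup>2 + g * q * z + q\<^sup>2"
definition AAs :: "real \<Rightarrow> real \<Rightarrow> real \<Rightarrow> real" where "AAs g q z = z + g * q / 2"
definition EEs :: "real \<Rightarrow> real \<Rightarrow> real \<Rightarrow> real" where
  "EEs g q z = exp (fG g * arctan (AAs g q z / (fh g * q)))"

lemma fh_pos: "-2 < g \<Longrightarrow> g < 2 \<Longrightarrow> fh g > 0"
proof -
  assume "-2 < g" "g < 2"
  then have "(2 - g) * (2 + g) > 0" by simp
  then have "g^2 < 4" by (simp add: power2_eq_square algebra_simps)
  then show ?thesis by (simp add: fh_def)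
qed

lemma fh_sq: "-2 < g \<Longrightarrow> g < 2 \<Longrightarrow> (fh g)\<^sup>2 = 1 - g\<^sup>2/4"
proof -
  assume "-2 < g" "g < 2"
  then have "(2 - g) * (2 + g) > 0" by simp
  then have "g^2 < 4" by (simp add: power2_eq_square algebra_simps)
  then show ?thesis by (simp add: fh_def)
qed

lemma BB_AA: "-2 < g \<Longrightarrow> g < 2 \<Longrightarrow> BBs g q z = (AAs g q z)\<^sup>2 + (fh g * q)\<^sup>2"
proof -
  assume g: "-2 < g" "g < 2"
  show ?thesis unfolding BBs_def AAs_def power_mult_distrib fh_sq[OF g]
    by (simp add: power2_eq_square field_simps)
qed

lemma BB_pos: "-2 < g \<Longrightarrow> g < 2 \<Longrightarrow> q > 0 \<Longrightarrow> BBs g q z > 0"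
proof -
  assume a: "-2 < g" "g < 2" "q > 0"
  then have "(fh g * q)\<^sup>2 > 0" using fh_pos[OF a(1,2)] by simp
  moreover have "(AAs g q z)\<^sup>2 \<ge> 0" by simp
  ultimately show ?thesis using BB_AA[OF a(1,2), of q z] by linarith
qed

lemma EE_deriv:
  assumes g: "-2 < g" "g < 2" and q: "DERIV qc 0 :> q'" and z: "DERIV zc 0 :> z'" and q0: "qc 0 > 0"
  shows "DERIV (\<lambda>t. EEs g (qc t) (zc t)) 0 :>
     EEs g (qc 0) (zc 0) * (g * (qc 0 * z' - zc 0 * q') / BBs g (qc 0) (zc 0))"
proof -
  define h where "h = fh g"
  have h: "h > 0" "h\<^sup>2 = 1 - g\<^sup>2/4" using fh_pos[OF g] fh_sq[OF g] by (simp_all add: h_def)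
  have B: "BBs g (qc 0) (zc 0) = (AAs g (qc 0) (zc 0))\<^sup>2 + (h * qc 0)\<^sup>2" using BB_AA[OF g] by (simp add: h_def)
  have Bp: "BBs g (qc 0) (zc 0) > 0" using BB_pos[OF g q0] .
  have a1: "DERIV (\<lambda>t. AAs g (qc t) (zc t)) 0 :> z' + g * q' / 2"
    unfolding AAs_def using DERIV_add[OF z DERIV_cdivide[OF DERIV_cmult[OF q, of g], of 2]] by simp
  have a2: "DERIV (\<lambda>t. h * qc t) 0 :> h * q'"
    by (rule DERIV_cmult[OF q])
  have a3: "DERIV (\<lambda>t. AAs g (qc t) (zc t) / (h * qc t)) 0 :>
     ((z' + g * q' / 2) * (h * qc 0) - AAs g (qc 0) (zc 0) * (h * q')) / ((h * qc 0) * (h * qc 0))"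
    using DERIV_divide[OF a1 a2] h q0 by simp
  define y where "y = AAs g (qc 0) (zc 0) / (h * qc 0)"
  have a4: "DERIV (\<lambda>t. arctan (AAs g (qc t) (zc t) / (h * qc t))) 0 :>
     inverse (1 + y\<^sup>2) * (((z' + g * q' / 2) * (h * qc 0) - AAs g (qc 0) (zc 0) * (h * q')) / ((h * qc 0) * (h * qc 0)))"
    using DERIV_chain2[OF DERIV_arctan a3] by (simp add: y_def)
  have a5: "DERIV (\<lambda>t. EEs g (qc t) (zc t)) 0 :>
     exp (fG g * arctan y) * (fG g * (inverse (1 + y\<^sup>2) * (((z' + g * q' / 2) * (h * qc 0) - AAs g (qc 0) (zc 0) * (h * q')) / ((h * qc 0) * (h * qc 0)))))"
    unfolding EEs_def h_def[symmetric]
    using DERIV_chain2[OF DERIV_exp DERIV_cmult[OF a4, of "fG g"]] by (simp add: y_def)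
  have i: "inverse (1 + y\<^sup>2) = (h * qc 0)\<^sup>2 / BBs g (qc 0) (zc 0)"
    unfolding y_def using B h q0 by (simp add: field_simps power2_eq_square)
  have e: "exp (fG g * arctan y) = EEs g (qc 0) (zc 0)" by (simp add: EEs_def y_def h_def)
  have k: "(fG g * (inverse (1 + y\<^sup>2) * (((z' + g * q' / 2) * (h * qc 0) - AAs g (qc 0) (zc 0) * (h * q')) / ((h * qc 0) * (h * qc 0)))))
      = g * (qc 0 * z' - zc 0 * q') / BBs g (qc 0) (zc 0)"
    unfolding i fG_def h_def[symmetric] using h q0 Bp
    by (simp add: AAs_def field_simps power2_eq_square)
  show ?thesis by (rule DERIV_cong[OF a5]) (simp only: e k)
qed

lemma KK_deriv:
  assumes g: "-2 < g" "g < 2" and q: "DERIV qc 0 :> q'" and z: "DERIV zc 0 :> z'" and q0: "qc 0 > 0"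
  shows "DERIV (\<lambda>t. BBs g (qc t) (zc t) * EEs g (qc t) (zc t)) 0 :>
     2 * EEs g (qc 0) (zc 0) * (qc 0 * q' + (zc 0 + g * qc 0) * z')"
proof -
  have Bp: "BBs g (qc 0) (zc 0) > 0" using BB_pos[OF g q0] .
  have b: "DERIV (\<lambda>t. BBs g (qc t) (zc t)) 0 :> 2 * zc 0 * z' + g * (q' * zc 0 + qc 0 * z') + 2 * qc 0 * q'"
  proof -
    have "DERIV (\<lambda>t. zc t * zc t + g * qc t * zc t + qc t * qc t) 0 :>
        (z' * zc 0 + zc 0 * z') + (g * q' * zc 0 + g * qc 0 * z') + (q' * qc 0 + qc 0 * q')"
      by (rule DERIV_cong[OF DERIV_add[OF DERIV_add[OF DERIV_mult[OF z z] DERIV_mult[OF DERIV_cmult[OF q, of g] z]] DERIV_mult[OF q q]]])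
        (simp add: algebra_simps)
    then show ?thesis unfolding BBs_def power2_eq_square by (rule DERIV_cong) (simp add: algebra_simps)
  qed
  have "DERIV (\<lambda>t. BBs g (qc t) (zc t) * EEs g (qc t) (zc t)) 0 :>
     (2 * zc 0 * z' + g * (q' * zc 0 + qc 0 * z') + 2 * qc 0 * q') * EEs g (qc 0) (zc 0)
     + BBs g (qc 0) (zc 0) * (EEs g (qc 0) (zc 0) * (g * (qc 0 * z' - zc 0 * q') / BBs g (qc 0) (zc 0)))"
    by (rule DERIV_cong[OF DERIV_mult[OF b EE_deriv[OF g q z q0]]]) (simp add: algebra_simps)
  moreover have "(2 * zc 0 * z' + g * (q' * zc 0 + qc 0 * z') + 2 * qc 0 * q') * EEs g (qc 0) (zc 0)
     + BBs g (qc 0) (zc 0) * (EEs g (qc 0) (zc 0) * (g * (qc 0 * z' - zc 0 * q') / BBs g (qc 0) (zc 0)))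
     = 2 * EEs g (qc 0) (zc 0) * (qc 0 * q' + (zc 0 + g * qc 0) * z')"
    using Bp by (simp add: field_simps)
  ultimately show ?thesis by simp
qed

lemma alg_Bd:
  fixes q z qd zd g :: real
  assumes q: "q > 0" and t: "q * qd + (z + g * q) * zd = 0"
  shows "2 * z * zd + g * (qd * z + q * zd) + 2 * q * qd = - g * zd * BBs g q z / q"
proof -
  have qd: "qd = - (z + g * q) * zd / q" using t q by (simp add: field_simps)
  show ?thesis unfolding qd BBs_def using q by (simp add: field_simps power2_eq_square)
qed

lemma alg_sig1:
  fixes q z qd zd g S :: real
  assumes q: "q > 0" and S: "S > 0" "S\<^sup>2 = BBs g q z" and t: "q * qd + (z + g * q) * zd = 0"
  shows "- (inverse S / 2 * (2 * z * zd + g * (qd * z + q * zd) + 2 * q * qd) * inverse (S ^ 2)) = g * zd / (2 * q * S)"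
  unfolding alg_Bd[OF q t] S(2)[symmetric] using q S(1) by (simp add: field_simps power2_eq_square)

lemma alg_sig2:
  fixes q z qd zd g S h :: real
  assumes q: "q > 0" and S: "S > 0" "S\<^sup>2 = BBs g q z" and t: "q * qd + (z + g * q) * zd = 0"
    and h: "h > 0" "h\<^sup>2 = 1 - g\<^sup>2/4"
  shows "((zd + g * qd / 2) * (h * S) - AAs g q z * (h * (inverse S / 2 * (2 * z * zd + g * (qd * z + q * zd) + 2 * q * qd))))
           / (h * S * (h * S)) = h * zd / S"
proof -
  have qd: "qd = - (z + g * q) * zd / q" using t q by (simp add: field_simps)
  have B: "2 * z * zd + g * (qd * z + q * zd) + 2 * q * qd = - g * zd * S\<^sup>2 / q"
    unfolding S(2) by (rule alg_Bd[OF q t])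
  have h2: "h * h = 1 - g\<^sup>2/4" using h(2) by (simp add: power2_eq_square)
  show ?thesis unfolding B unfolding qd AAs_def using q S(1) h(1) h2
    apply (simp add: field_simps power2_eq_square)
  proof -
    assume "g * g + h * (h * 4) = 4"
    then have gg: "g * (g * X) = (4 - h * (h * 4)) * X" for X
      by (metis add_diff_cancel_right' mult.assoc)
    show "S * (S * (h * (q * (q * (zd * 8))))) =
     S * (S * (g * (g * (h * (q * (q * (zd * 2))))))) + S * (S * (h * (h * (h * (q * (q * (zd * 8)))))))"
      by (simp add: gg algebra_simps)
  qed
qed

definition sig :: "real \<Rightarrow> real^'m^'m \<Rightarrow> (real^'m) \<times> real \<Rightarrow> (real^'m) \<times> real" where
  "sig g r R = ((1 / sqrt (fB g r R)) *\<^sub>R fst R, fA g r R / (fh g * sqrt (fB g r R)))"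

definition Dsig :: "real \<Rightarrow> real^'m^'m \<Rightarrow> (real^'m) \<times> real \<Rightarrow> (real^'m) \<times> real \<Rightarrow> (real^'m) \<times> real" where
  "Dsig g r R v = ((1 / sqrt (fB g r R)) *\<^sub>R fst v + (g * snd v / (2 * fq r R * sqrt (fB g r R))) *\<^sub>R fst R,
                   fh g * snd v / sqrt (fB g r R))"

definition bb :: "real^'m^'m \<Rightarrow> (real^'m) \<times> real \<Rightarrow> (real^'m) \<times> real \<Rightarrow> real" where
  "bb r a b = fst a \<bullet> (r *v fst b) + snd a * snd b"

locale fins =
  fixes g :: real and r :: "real^'m^'m"
  assumes g1: "-2 < g" and g2: "g < 2" and rsym0: "transpose r = r"
    and rpos: "\<And>x. x \<noteq> 0 \<Longrightarrow> x \<bullet> (r *v x) > 0"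
begin

lemma rsym: "x \<bullet> (r *v y) = y \<bullet> (r *v x)"
proof -
  have "x \<bullet> (r *v y) = (x v* r) \<bullet> y" by (simp add: dot_lmul_matrix)
  also have "x v* r = r *v x" using vector_transpose_matrix[of x r] rsym0 by simp
  finally show ?thesis by (simp add: inner_commute)
qed

lemma Qnn: "x \<bullet> (r *v x) \<ge> 0"
  using rpos[of x] by (cases "x = 0") auto

lemma fq_sq: "(fq r R)\<^sup>2 = fst R \<bullet> (r *v fst R)"
  unfolding fq_def using Qnn by simp

lemma fq_nn: "fq r R \<ge> 0" by (simp add: fq_def Qnn)

lemma fB_eq: "fB g r R = BBs g (fq r R) (snd R)" by (simp add: fB_def BBs_def)
lemma fA_eq: "fA g r R = AAs g (fq r R) (snd R)" by (simp add: fA_def AAs_def)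

lemma fB_pos: "fq r R > 0 \<Longrightarrow> fB g r R > 0"
  unfolding fB_eq by (rule BB_pos[OF g1 g2])

lemma K2_formula:
  assumes "fq r R > 0"
  shows "(fK g r R)\<^sup>2 = BBs g (fq r R) (snd R) * EEs g (fq r R) (snd R)"
proof -
  have "(sqrt (fB g r R))\<^sup>2 = fB g r R" using fB_pos[OF assms] by simp
  moreover have "(fJ g r R)\<^sup>2 = EEs g (fq r R) (snd R)"
    using assms by (simp add: fJ_def fPhi_def EEs_def fA_eq power2_eq_square exp_add[symmetric])
  ultimately show ?thesis by (simp add: fK_def power_mult_distrib fB_eq)
qed

lemma bbil: "bounded_bilinear (\<lambda>a b::(real^'m) \<times> real. fst a \<bullet> (r *v fst b))"
proof -
  have "bounded_linear (\<lambda>b::(real^'m) \<times> real. r *v fst b)"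
    by (rule bounded_linear_compose[OF matrix_vector_mul_bounded_linear bounded_linear_fst])
  then show ?thesis by (rule bounded_bilinear.comp[OF bounded_bilinear_inner bounded_linear_fst])
qed

lemma Q_deriv:
  fixes \<gamma> :: "real \<Rightarrow> (real^'m) \<times> real"
  assumes "(\<gamma> has_vector_derivative v) (at 0)"
  shows "DERIV (\<lambda>t. fst (\<gamma> t) \<bullet> (r *v fst (\<gamma> t))) 0 :> 2 * (fst (\<gamma> 0) \<bullet> (r *v fst v))"
proof -
  have "((\<lambda>t. fst (\<gamma> t) \<bullet> (r *v fst (\<gamma> t))) has_vector_derivative
      fst (\<gamma> 0) \<bullet> (r *v fst v) + fst v \<bullet> (r *v fst (\<gamma> 0))) (at 0)"
    using bounded_bilinear.has_vector_derivative[OF bbil assms assms] by simp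
  then show ?thesis using rsym[of "fst v" "fst (\<gamma> 0)"]
    by (simp add: has_real_derivative_iff_has_vector_derivative)
qed

lemma aux_inv2: "inverse (s::real) / 2 * (2 * x) = x / s"
proof -
  have "inverse s / 2 * (2 * x) = inverse s * x" by simp
  also have "\<dots> = x / s" by (simp add: field_class.field_divide_inverse mult.commute)
  finally show ?thesis .
qed

lemma q_deriv:
  fixes \<gamma> :: "real \<Rightarrow> (real^'m) \<times> real"
  assumes "(\<gamma> has_vector_derivative v) (at 0)" "fq r (\<gamma> 0) > 0"
  shows "DERIV (\<lambda>t. fq r (\<gamma> t)) 0 :> (fst (\<gamma> 0) \<bullet> (r *v fst v)) / fq r (\<gamma> 0)"
proof -
  define Q where "Q t = fst (\<gamma> t) \<bullet> (r *v fst (\<gamma> t))" for t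
  have Q0: "Q 0 > 0" using assms(2) unfolding fq_def Q_def by (rule real_sqrt_gt_0_iff[THEN iffD1])
  have dQ: "DERIV Q 0 :> 2 * (fst (\<gamma> 0) \<bullet> (r *v fst v))" unfolding Q_def by (rule Q_deriv[OF assms(1)])
  have "DERIV (\<lambda>t. sqrt (Q t)) 0 :> inverse (sqrt (Q 0)) / 2 * (2 * (fst (\<gamma> 0) \<bullet> (r *v fst v)))"
    by (rule DERIV_chain'[OF dQ DERIV_real_sqrt[OF Q0]])
  moreover have "(\<lambda>t. sqrt (Q t)) = (\<lambda>t. fq r (\<gamma> t))" by (simp add: fun_eq_iff Q_def fq_def)
  moreover have "inverse (sqrt (Q 0)) / 2 * (2 * (fst (\<gamma> 0) \<bullet> (r *v fst v))) = (fst (\<gamma> 0) \<bullet> (r *v fst v)) / fq r (\<gamma> 0)"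
    unfolding Q_def fq_def by (rule aux_inv2)
  ultimately show ?thesis by simp
qed

lemma snd_deriv:
  fixes \<gamma> :: "real \<Rightarrow> (real^'m) \<times> real"
  assumes "(\<gamma> has_vector_derivative v) (at 0)"
  shows "DERIV (\<lambda>t. snd (\<gamma> t)) 0 :> snd v"
  using bounded_linear.has_vector_derivative[OF bounded_linear_snd assms]
  by (simp add: has_real_derivative_iff_has_vector_derivative)

lemma fst_deriv:
  fixes \<gamma> :: "real \<Rightarrow> (real^'m) \<times> real"
  assumes "(\<gamma> has_vector_derivative v) (at 0)"
  shows "((\<lambda>t. fst (\<gamma> t)) has_vector_derivative fst v) (at 0)"
  using bounded_linear.has_vector_derivative[OF bounded_linear_fst assms] by simp

lemma K2_curve:
  fixes \<gamma> :: "real \<Rightarrow> (real^'m) \<times> real"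
  assumes d: "(\<gamma> has_vector_derivative v) (at 0)" and q0: "fq r (\<gamma> 0) > 0"
  shows "DERIV (\<lambda>t. (fK g r (\<gamma> t))\<^sup>2) 0 :>
     2 * EEs g (fq r (\<gamma> 0)) (snd (\<gamma> 0)) * (fst (\<gamma> 0) \<bullet> (r *v fst v) + (snd (\<gamma> 0) + g * fq r (\<gamma> 0)) * snd v)"
proof -
  note qd = q_deriv[OF d q0]
  have KK: "DERIV (\<lambda>t. BBs g (fq r (\<gamma> t)) (snd (\<gamma> t)) * EEs g (fq r (\<gamma> t)) (snd (\<gamma> t))) 0 :>
     2 * EEs g (fq r (\<gamma> 0)) (snd (\<gamma> 0)) * (fq r (\<gamma> 0) * ((fst (\<gamma> 0) \<bullet> (r *v fst v)) / fq r (\<gamma> 0))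
        + (snd (\<gamma> 0) + g * fq r (\<gamma> 0)) * snd v)"
    by (rule KK_deriv[OF g1 g2 qd snd_deriv[OF d] q0])
  have "isCont (\<lambda>t. fq r (\<gamma> t)) 0" using qd by (rule DERIV_isCont)
  from continuous_at_avoid[OF this, of 0] q0 obtain e where e: "e > 0" "\<And>y. dist 0 y < e \<Longrightarrow> fq r (\<gamma> y) \<noteq> 0"
    by auto
  have "eventually (\<lambda>t. fq r (\<gamma> t) > 0) (nhds 0)"
    unfolding eventually_nhds_metric
    using e fq_nn by (intro exI[of _ e]) (auto simp: dist_commute order_less_le)
  then have ev: "eventually (\<lambda>t. (fK g r (\<gamma> t))\<^sup>2 = BBs g (fq r (\<gamma> t)) (snd (\<gamma> t)) * EEs g (fq r (\<gamma> t)) (snd (\<gamma> t))) (nhds 0)"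
    by eventually_elim (rule K2_formula)
  have "DERIV (\<lambda>t. (fK g r (\<gamma> t))\<^sup>2) 0 :>
     2 * EEs g (fq r (\<gamma> 0)) (snd (\<gamma> 0)) * (fq r (\<gamma> 0) * ((fst (\<gamma> 0) \<bullet> (r *v fst v)) / fq r (\<gamma> 0))
        + (snd (\<gamma> 0) + g * fq r (\<gamma> 0)) * snd v)"
    using DERIV_cong_ev[OF refl ev refl] KK by simp
  then show ?thesis using q0 by simp
qed

end

lemma BB_deriv:
  assumes q: "DERIV qc 0 :> q'" and z: "DERIV zc 0 :> z'"
  shows "DERIV (\<lambda>t. BBs g (qc t) (zc t)) 0 :> 2 * zc 0 * z' + g * (q' * zc 0 + qc 0 * z') + 2 * qc 0 * q'"
proof -
  have "DERIV (\<lambda>t. zc t * zc t + g * qc t * zc t + qc t * qc t) 0 :>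
      2 * zc 0 * z' + g * (q' * zc 0 + qc 0 * z') + 2 * qc 0 * q'"
    by (rule DERIV_cong[OF DERIV_add[OF DERIV_add[OF DERIV_mult[OF z z] DERIV_mult[OF DERIV_cmult[OF q, of g] z]] DERIV_mult[OF q q]]])
      (simp add: algebra_simps)
  then show ?thesis unfolding BBs_def power2_eq_square .
qed

lemma ev_pos:
  fixes f :: "real \<Rightarrow> real"
  assumes "DERIV f 0 :> D" "f 0 > 0"
  shows "eventually (\<lambda>s. f s > 0) (nhds 0)"
proof -
  have "isCont f 0" using assms(1) by (rule DERIV_isCont)
  then have "(f \<longlongrightarrow> f 0) (at 0)" by (simp add: isCont_def)
  then have "eventually (\<lambda>s. 0 < f s) (at 0)" using assms(2) by (rule order_tendstoD(1))
  then obtain S where S: "open S" "0 \<in> S" "\<And>x. x \<in> S \<Longrightarrow> x \<noteq> 0 \<Longrightarrow> 0 < f x"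
    unfolding eventually_at_topological by blast
  have "\<forall>x\<in>S. 0 < f x" using S(3) assms(2) by (metis)
  then show ?thesis unfolding eventually_nhds using S(1,2) by blast
qed

lemma line_hvd: "((\<lambda>s. R + s *\<^sub>R w) has_vector_derivative w) (at x)"
proof -
  have "((\<lambda>s. s *\<^sub>R w) has_vector_derivative 1 *\<^sub>R w) (at x)"
    by (rule bounded_linear.has_vector_derivative[OF bounded_linear_scaleR_left has_vector_derivative_id])
  from has_vector_derivative_add[OF has_vector_derivative_const this] show ?thesis by simp
qed

lemma line2_hvd: "((\<lambda>t. R + t *\<^sub>R v + s *\<^sub>R w) has_vector_derivative v) (at x)"
proof -
  have "((\<lambda>t. (R + s *\<^sub>R w) + t *\<^sub>R v) has_vector_derivative v) (at x)" by (rule line_hvd)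
  then show ?thesis by (simp add: algebra_simps)
qed

context fins begin

lemma sig_curve:
  fixes \<gamma> :: "real \<Rightarrow> (real^'m) \<times> real"
  assumes d: "(\<gamma> has_vector_derivative v) (at 0)" and q0: "fq r (\<gamma> 0) > 0"
    and tg: "fst (\<gamma> 0) \<bullet> (r *v fst v) + (snd (\<gamma> 0) + g * fq r (\<gamma> 0)) * snd v = 0"
  shows "((\<lambda>t. sig g r (\<gamma> t)) has_vector_derivative Dsig g r (\<gamma> 0) v) (at 0)"
proof -
  define q where "q t = fq r (\<gamma> t)" for t
  define z where "z t = snd (\<gamma> t)" for t
  define xv where "xv = fst (\<gamma> 0) \<bullet> (r *v fst v)"
  define S where "S t = sqrt (BBs g (q t) (z t))" for t
  define h where "h = fh g"
  have h: "h > 0" "h\<^sup>2 = 1 - g\<^sup>2/4" using fh_pos[OF g1 g2] fh_sq[OF g1 g2] by (simp_all add: h_def)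
  have qp: "q 0 > 0" using q0 by (simp add: q_def)
  have dq: "DERIV q 0 :> xv / q 0" unfolding q_def xv_def by (rule q_deriv[OF d q0])
  have dz: "DERIV z 0 :> snd v" unfolding z_def by (rule snd_deriv[OF d])
  have tg': "q 0 * (xv / q 0) + (z 0 + g * q 0) * snd v = 0"
    using tg qp by (simp add: q_def z_def xv_def)
  define B' where "B' = 2 * z 0 * snd v + g * (xv / q 0 * z 0 + q 0 * snd v) + 2 * q 0 * (xv / q 0)"
  have dB: "DERIV (\<lambda>t. BBs g (q t) (z t)) 0 :> B'" unfolding B'_def by (rule BB_deriv[OF dq dz])
  have Bp: "BBs g (q 0) (z 0) > 0" by (rule BB_pos[OF g1 g2 qp])
  have dS: "DERIV S 0 :> inverse (S 0) / 2 * B'"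
    unfolding S_def by (rule DERIV_chain'[OF dB DERIV_real_sqrt[OF Bp]])
  have Sp: "S 0 > 0" using Bp by (simp add: S_def)
  have S2: "(S 0)\<^sup>2 = BBs g (q 0) (z 0)" using Bp by (simp add: S_def)
  have dI: "DERIV (\<lambda>t. inverse (S t)) 0 :> - (inverse (S 0) / 2 * B' * inverse (S 0 ^ Suc (Suc 0)))"
    using DERIV_inverse_fun[OF dS] Sp by (metis less_irrefl)
  have c1: "- (inverse (S 0) / 2 * B' * inverse (S 0 ^ Suc (Suc 0))) = g * snd v / (2 * q 0 * S 0)"
    using alg_sig1[OF qp Sp S2 tg'] unfolding B'_def numeral_2_eq_2 .
  have v1: "((\<lambda>t. inverse (S t) *\<^sub>R fst (\<gamma> t)) has_vector_derivative
      inverse (S 0) *\<^sub>R fst v + (g * snd v / (2 * q 0 * S 0)) *\<^sub>R fst (\<gamma> 0)) (at 0)"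
    using has_vector_derivative_scaleR[OF dI fst_deriv[OF d]] unfolding c1 .
  have dA: "DERIV (\<lambda>t. AAs g (q t) (z t)) 0 :> snd v + g * (xv / q 0) / 2"
    unfolding AAs_def using DERIV_add[OF dz DERIV_cdivide[OF DERIV_cmult[OF dq, of g], of 2]] by simp
  have dhS: "DERIV (\<lambda>t. h * S t) 0 :> h * (inverse (S 0) / 2 * B')" by (rule DERIV_cmult[OF dS])
  have v2: "DERIV (\<lambda>t. AAs g (q t) (z t) / (h * S t)) 0 :>
     ((snd v + g * (xv / q 0) / 2) * (h * S 0) - AAs g (q 0) (z 0) * (h * (inverse (S 0) / 2 * B'))) / (h * S 0 * (h * S 0))"
  proof -
    have "h * S 0 \<noteq> 0" using h Sp by simp
    from DERIV_divide[OF dA dhS this] show ?thesis .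
  qed
  have c2: "((snd v + g * (xv / q 0) / 2) * (h * S 0) - AAs g (q 0) (z 0) * (h * (inverse (S 0) / 2 * B'))) / (h * S 0 * (h * S 0))
      = h * snd v / S 0"
    using alg_sig2[OF qp Sp S2 tg' h] unfolding B'_def .
  have v2': "((\<lambda>t. AAs g (q t) (z t) / (h * S t)) has_vector_derivative h * snd v / S 0) (at 0)"
    using v2 unfolding c2 has_real_derivative_iff_has_vector_derivative .
  have "((\<lambda>t. (inverse (S t) *\<^sub>R fst (\<gamma> t), AAs g (q t) (z t) / (h * S t))) has_vector_derivative
     (inverse (S 0) *\<^sub>R fst v + (g * snd v / (2 * q 0 * S 0)) *\<^sub>R fst (\<gamma> 0), h * snd v / S 0)) (at 0)"
    by (rule has_vector_derivative_Pair[OF v1 v2'])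
  moreover have "(\<lambda>t. sig g r (\<gamma> t)) = (\<lambda>t. (inverse (S t) *\<^sub>R fst (\<gamma> t), AAs g (q t) (z t) / (h * S t)))"
    by (rule ext) (simp add: sig_def S_def q_def z_def h_def fB_eq fA_eq inverse_eq_divide)
  moreover have "Dsig g r (\<gamma> 0) v = (inverse (S 0) *\<^sub>R fst v + (g * snd v / (2 * q 0 * S 0)) *\<^sub>R fst (\<gamma> 0), h * snd v / S 0)"
    by (simp add: Dsig_def S_def q_def z_def h_def fB_eq inverse_eq_divide)
  ultimately show ?thesis by simp
qed

end

context fins begin

lemma finsler_tangent:
  assumes q0: "fq r R > 0" and tg: "fst R \<bullet> (r *v fst v) + (snd R + g * fq r R) * snd v = 0"
  shows "finsler_g g r R v w = EEs g (fq r R) (snd R) *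
     (fst w \<bullet> (r *v fst v) + snd w * snd v + g * (fst R \<bullet> (r *v fst w)) / fq r R * snd v)"
proof -
  define q where "q s = fq r (R + s *\<^sub>R w)" for s
  define z where "z s = snd R + s * snd w" for s
  define a0 where "a0 = fst R \<bullet> (r *v fst v)"
  define a1 where "a1 = fst w \<bullet> (r *v fst v)"
  define xw where "xw = fst R \<bullet> (r *v fst w)"
  define M where "M s = a0 + s * a1 + (z s + g * q s) * snd v" for s
  define H where "H s = 2 * EEs g (q s) (z s) * M s" for s
  have qp: "q 0 > 0" using q0 by (simp add: q_def)
  have q0': "fq r (R + 0 *\<^sub>R w) > 0" using q0 by simp
  have dq: "DERIV q 0 :> xw / q 0"
    unfolding q_def xw_def using q_deriv[OF line_hvd q0'] by simp
  have dz: "DERIV z 0 :> snd w"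
    unfolding z_def by (rule DERIV_cong[OF DERIV_add[OF DERIV_const DERIV_mult[OF DERIV_ident DERIV_const]]]) simp
  have dE: "DERIV (\<lambda>s. EEs g (q s) (z s)) 0 :>
      EEs g (q 0) (z 0) * (g * (q 0 * snd w - z 0 * (xw / q 0)) / BBs g (q 0) (z 0))"
    by (rule EE_deriv[OF g1 g2 dq dz qp])
  have dM: "DERIV M 0 :> a1 + (snd w + g * (xw / q 0)) * snd v"
    unfolding M_def
    by (rule DERIV_cong[OF DERIV_add[OF DERIV_add[OF DERIV_const DERIV_mult[OF DERIV_ident DERIV_const]]
          DERIV_mult[OF DERIV_add[OF dz DERIV_cmult[OF dq]] DERIV_const]]]) simp
  have M0: "M 0 = 0" using tg by (simp add: M_def a0_def z_def q_def)
  define H' where "H' = 2 * EEs g (q 0) (z 0) * (a1 + (snd w + g * (xw / q 0)) * snd v)"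
  have dH: "DERIV H 0 :> H'"
    unfolding H_def H'_def
    by (rule DERIV_cong[OF DERIV_mult[OF DERIV_cmult[OF dE, of 2] dM]]) (simp add: M0)
  have ev: "eventually (\<lambda>s. deriv (\<lambda>t. (fK g r (R + t *\<^sub>R v + s *\<^sub>R w))\<^sup>2) 0 = H s) (nhds 0)"
    using ev_pos[OF dq qp]
  proof eventually_elim
    case (elim s)
    have qs: "fq r (R + 0 *\<^sub>R v + s *\<^sub>R w) > 0" using elim by (simp add: q_def)
    have "DERIV (\<lambda>t. (fK g r (R + t *\<^sub>R v + s *\<^sub>R w))\<^sup>2) 0 :>
       2 * EEs g (fq r (R + 0 *\<^sub>R v + s *\<^sub>R w)) (snd (R + 0 *\<^sub>R v + s *\<^sub>R w)) *
       (fst (R + 0 *\<^sub>R v + s *\<^sub>R w) \<bullet> (r *v fst v) + (snd (R + 0 *\<^sub>R v + s *\<^sub>R w) + g * fq r (R + 0 *\<^sub>R v + s *\<^sub>R w)) * snd v)"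
      by (rule K2_curve[OF line2_hvd qs])
    moreover have "2 * EEs g (fq r (R + 0 *\<^sub>R v + s *\<^sub>R w)) (snd (R + 0 *\<^sub>R v + s *\<^sub>R w)) *
       (fst (R + 0 *\<^sub>R v + s *\<^sub>R w) \<bullet> (r *v fst v) + (snd (R + 0 *\<^sub>R v + s *\<^sub>R w) + g * fq r (R + 0 *\<^sub>R v + s *\<^sub>R w)) * snd v) = H s"
      by (simp add: H_def M_def q_def z_def a0_def a1_def inner_add_left)
    ultimately show ?case by (simp add: DERIV_imp_deriv)
  qed
  have "DERIV (\<lambda>s. deriv (\<lambda>t. (fK g r (R + t *\<^sub>R v + s *\<^sub>R w))\<^sup>2) 0) 0 :> H'"
    using DERIV_cong_ev[OF refl ev refl] dH by simp
  then have "finsler_g g r R v w = 1/2 * H'" by (simp add: finsler_g_def DERIV_imp_deriv)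
  also have "\<dots> = EEs g (fq r R) (snd R) *
     (fst w \<bullet> (r *v fst v) + snd w * snd v + g * (fst R \<bullet> (r *v fst w)) / fq r R * snd v)"
    by (simp add: H'_def q_def z_def a1_def xw_def algebra_simps)
  finally show ?thesis .
qed

end

lemma alg_metric:
  fixes q z S h g E P vn wn :: real
  assumes q: "q > 0" and S: "S > 0" "S\<^sup>2 = BBs g q z" and h: "h\<^sup>2 = 1 - g\<^sup>2/4" and E: "E * BBs g q z = 1"
  shows "E * (P + wn * vn + g * (- (z + g * q) * wn) / q * vn) =
    (1/S) * (1/S) * P + (1/S) * (g * wn / (2 * q * S)) * (- (z + g * q) * vn)
    + (g * vn / (2 * q * S)) * (1/S) * (- (z + g * q) * wn)
    + (g * vn / (2 * q * S)) * (g * wn / (2 * q * S)) * q\<^sup>2 + (h * vn / S) * (h * wn / S)"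
proof -
  have B: "BBs g q z > 0" using S by (metis zero_less_power2 less_irrefl)
  have E': "E = 1 / (S * S)" using E S(2) B by (simp add: field_simps power2_eq_square)
  have hh: "h * h = 1 - g\<^sup>2/4" using h by (simp add: power2_eq_square)
  have "(h * vn / S) * (h * wn / S) = (h * h) * (vn * wn) / (S * S)"
    by (simp add: field_simps)
  also have "\<dots> = (1 - g\<^sup>2/4) * (vn * wn) / (S * S)" by (simp only: hh)
  finally have hv: "(h * vn / S) * (h * wn / S) = (1 - g\<^sup>2/4) * (vn * wn) / (S * S)" .
  show ?thesis unfolding E' hv using q S(1)
    by (simp add: field_simps power2_eq_square)
qed

context fins begin

lemma bb_sym: "bb r a b = bb r b a"
  by (simp add: bb_def rsym)

lemma bb_bil: "bounded_bilinear (bb r)"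
proof -
  have "bilinear (bb r)"
    unfolding bilinear_def
    by (auto intro!: linearI simp: bb_def algebra_simps inner_add_left inner_add_right)
  then show ?thesis by (simp add: bilinear_conv_bounded_bilinear)
qed

lemma bb_pos: "a \<noteq> 0 \<Longrightarrow> bb r a a > 0"
proof -
  assume a: "a \<noteq> 0"
  show ?thesis
  proof (cases "fst a = 0")
    case True
    then have "snd a \<noteq> 0" using a by (simp add: prod_eq_iff)
    then have "snd a * snd a > 0" by (metis not_real_square_gt_zero)
    then show ?thesis using True by (simp add: bb_def)
  next
    case False
    then have "fst a \<bullet> (r *v fst a) > 0" by (rule rpos)
    moreover have "snd a * snd a \<ge> 0" by simp
    ultimately show ?thesis unfolding bb_def by (rule add_pos_nonneg)
  qed
qed

lemma sig_const:
  assumes q0: "fq r R > 0"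
  shows "bb r (sig g r R) (sig g r R) = 1 / (fh g)\<^sup>2"
proof -
  define q where "q = fq r R"
  define S where "S = sqrt (fB g r R)"
  define h where "h = fh g"
  have Bp: "fB g r R > 0" by (rule fB_pos[OF q0])
  have S2: "S * S = BBs g q (snd R)" using Bp by (simp add: S_def fB_eq q_def)
  have Sp: "S > 0" using Bp by (simp add: S_def)
  have hp: "h > 0" by (simp add: h_def fh_pos[OF g1 g2])
  have BA: "BBs g q (snd R) = (AAs g q (snd R))\<^sup>2 + (h * q)\<^sup>2" using BB_AA[OF g1 g2] by (simp add: h_def)
  have "bb r (sig g r R) (sig g r R) = (1/S) * (1/S) * q\<^sup>2 + (AAs g q (snd R) / (h * S)) * (AAs g q (snd R) / (h * S))"
    by (simp add: bb_def sig_def S_def q_def h_def fq_sq fA_eq matrix_vector_mult_scaleR)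
  also have "\<dots> = ((h * q)\<^sup>2 + (AAs g q (snd R))\<^sup>2) / (h\<^sup>2 * (S * S))"
    using Sp hp by (simp add: field_simps power2_eq_square)
  also have "\<dots> = 1 / h\<^sup>2" unfolding S2 BA using Sp hp S2 BA
    by (metis (no_types, lifting) add.commute divide_divide_eq_left' div_self less_irrefl mult_pos_pos zero_less_power2)
  finally show ?thesis by (simp add: h_def)
qed

lemma metric_id:
  assumes q0: "fq r R > 0" and K1: "fK g r R = 1"
    and tv: "fst R \<bullet> (r *v fst v) + (snd R + g * fq r R) * snd v = 0"
    and tw: "fst R \<bullet> (r *v fst w) + (snd R + g * fq r R) * snd w = 0"
  shows "finsler_g g r R v w = bb r (Dsig g r R v) (Dsig g r R w)"
proof -
  define q where "q = fq r R"
  define z where "z = snd R"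
  define S where "S = sqrt (fB g r R)"
  define h where "h = fh g"
  have Bp: "fB g r R > 0" by (rule fB_pos[OF q0])
  have S2: "S\<^sup>2 = BBs g q z" using Bp by (simp add: S_def fB_eq q_def z_def)
  have Sp: "S > 0" using Bp by (simp add: S_def)
  have hh: "h\<^sup>2 = 1 - g\<^sup>2/4" by (simp add: h_def fh_sq[OF g1 g2])
  have E: "EEs g q z * BBs g q z = 1" using K2_formula[OF q0] K1 by (simp add: q_def z_def mult.commute)
  have f1: "fst v \<bullet> (r *v fst w) = fst w \<bullet> (r *v fst v)" by (rule rsym)
  have f2: "fst v \<bullet> (r *v fst R) = - (z + g * q) * snd v" using tv rsym[of "fst v" "fst R"] by (simp add: q_def z_def algebra_simps)
  have f3: "fst R \<bullet> (r *v fst w) = - (z + g * q) * snd w" using tw by (simp add: q_def z_def algebra_simps)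
  have f4: "fst R \<bullet> (r *v fst R) = q\<^sup>2" by (simp add: q_def fq_sq)
  have "finsler_g g r R v w = EEs g q z * (fst w \<bullet> (r *v fst v) + snd w * snd v + g * (- (z + g * q) * snd w) / q * snd v)"
    using finsler_tangent[OF q0 tv, of w] f3 by (simp add: q_def z_def)
  also have "\<dots> = (1/S) * (1/S) * (fst w \<bullet> (r *v fst v)) + (1/S) * (g * snd w / (2 * q * S)) * (- (z + g * q) * snd v)
    + (g * snd v / (2 * q * S)) * (1/S) * (- (z + g * q) * snd w)
    + (g * snd v / (2 * q * S)) * (g * snd w / (2 * q * S)) * q\<^sup>2 + (h * snd v / S) * (h * snd w / S)"
    by (rule alg_metric[OF q0[folded q_def] Sp S2 hh E])
  also have "\<dots> = bb r (Dsig g r R v) (Dsig g r R w)"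
    unfolding bb_def Dsig_def S_def[symmetric] q_def[symmetric] h_def[symmetric]
    apply (simp add: inner_add_left inner_add_right matrix_vector_right_distrib matrix_vector_mult_scaleR f1 f2 f3 f4)
    using Sp q0 by (simp add: q_def field_simps power2_eq_square)
  finally show ?thesis .
qed

lemma Dsig_linear: "linear (Dsig g r R)"
  by (rule linearI) (simp_all add: Dsig_def algebra_simps add_divide_distrib)

lemma Dsig_inj:
  assumes q0: "fq r R > 0" and "Dsig g r R V = 0"
  shows "V = 0"
proof -
  have Bp: "fB g r R > 0" by (rule fB_pos[OF q0])
  have hp: "fh g > 0" by (rule fh_pos[OF g1 g2])
  have "fh g * snd V / sqrt (fB g r R) = 0" using assms(2) by (simp add: Dsig_def prod_eq_iff)
  then have s: "snd V = 0" using Bp hp by simp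
  have "(1 / sqrt (fB g r R)) *\<^sub>R fst V = 0" using assms(2) s by (simp add: Dsig_def prod_eq_iff)
  then have "fst V = 0" using Bp by simp
  with s show ?thesis by (simp add: prod_eq_iff)
qed

end

lemma smooth_Ck: "smooth_on f U \<Longrightarrow> Ck k f U"
  by (simp add: smooth_on_def)

context fins begin

lemma tangent_pd:
  assumes U: "open U" and phi: "Ck (Suc 0) \<phi> U" and u: "u \<in> U"
    and ind: "\<And>u. u \<in> U \<Longrightarrow> fK g r (\<phi> u) = 1"
    and off: "\<And>u. u \<in> U \<Longrightarrow> fq r (\<phi> u) > 0"
  shows "fst (\<phi> u) \<bullet> (r *v fst (pd \<phi> i u)) + (snd (\<phi> u) + g * fq r (\<phi> u)) * snd (pd \<phi> i u) = 0"
proof -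
  have d: "((\<lambda>t. \<phi> (u + t *\<^sub>R axis i 1)) has_vector_derivative pd \<phi> i u) (at 0)"
    by (rule Ck_hvd[OF phi u])
  have q0: "fq r (\<phi> (u + 0 *\<^sub>R axis i 1)) > 0" using off[OF u] by simp
  have D1: "DERIV (\<lambda>t. (fK g r (\<phi> (u + t *\<^sub>R axis i 1)))\<^sup>2) 0 :>
     2 * EEs g (fq r (\<phi> u)) (snd (\<phi> u)) * (fst (\<phi> u) \<bullet> (r *v fst (pd \<phi> i u)) + (snd (\<phi> u) + g * fq r (\<phi> u)) * snd (pd \<phi> i u))"
    using K2_curve[OF d q0] by simp
  have ev: "eventually (\<lambda>t. (fK g r (\<phi> (u + t *\<^sub>R axis i 1)))\<^sup>2 = 1) (nhds 0)"
    using line_ev[OF U u, of "axis i 1"] by eventually_elim (simp add: ind)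
  have D0: "DERIV (\<lambda>t. (fK g r (\<phi> (u + t *\<^sub>R axis i 1)))\<^sup>2) 0 :> 0"
  proof -
    have "DERIV (\<lambda>t::real. 1::real) 0 :> 0" by (rule DERIV_const)
    then show ?thesis using DERIV_cong_ev[OF refl ev refl] by simp
  qed
  have "2 * EEs g (fq r (\<phi> u)) (snd (\<phi> u)) * (fst (\<phi> u) \<bullet> (r *v fst (pd \<phi> i u)) + (snd (\<phi> u) + g * fq r (\<phi> u)) * snd (pd \<phi> i u)) = 0"
    using DERIV_unique[OF D1 D0] .
  moreover have "EEs g (fq r (\<phi> u)) (snd (\<phi> u)) > 0" by (simp add: EEs_def)
  ultimately show ?thesis by simp
qed

lemma pd_psi:
  assumes U: "open U" and phi: "Ck (Suc 0) \<phi> U" and u: "u \<in> U"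
    and ind: "\<And>u. u \<in> U \<Longrightarrow> fK g r (\<phi> u) = 1"
    and off: "\<And>u. u \<in> U \<Longrightarrow> fq r (\<phi> u) > 0"
  shows "pd (\<lambda>v. sig g r (\<phi> v)) i u = Dsig g r (\<phi> u) (pd \<phi> i u)"
proof -
  have d: "((\<lambda>t. \<phi> (u + t *\<^sub>R axis i 1)) has_vector_derivative pd \<phi> i u) (at 0)"
    by (rule Ck_hvd[OF phi u])
  have q0: "fq r (\<phi> (u + 0 *\<^sub>R axis i 1)) > 0" using off[OF u] by simp
  have tg: "fst (\<phi> (u + 0 *\<^sub>R axis i 1)) \<bullet> (r *v fst (pd \<phi> i u)) +
     (snd (\<phi> (u + 0 *\<^sub>R axis i 1)) + g * fq r (\<phi> (u + 0 *\<^sub>R axis i 1))) * snd (pd \<phi> i u) = 0"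
    using tangent_pd[OF U phi u ind off] by simp
  show ?thesis
    by (rule pd_eqI) (use sig_curve[OF d q0 tg] in simp)
qed

lemma psi_Ck:
  assumes U: "open U" and phi: "\<And>k. Ck k \<phi> U"
    and off: "\<And>u. u \<in> U \<Longrightarrow> fq r (\<phi> u) > 0"
  shows "Ck k (\<lambda>v. sig g r (\<phi> v)) U"
proof -
  define Q where "Q u = fst (\<phi> u) \<bullet> (r *v fst (\<phi> u))" for u
  define q where "q u = sqrt (Q u)" for u
  define Z where "Z u = snd (\<phi> u)" for u
  define Bf where "Bf u = Z u * Z u + g * q u * Z u + q u * q u" for u
  define Af where "Af u = Z u + g * q u / 2" for u
  have qpos: "q u > 0" if "u \<in> U" for u using off[OF that] by (simp add: q_def Q_def fq_def)
  have Qpos: "Q u > 0" if "u \<in> U" for u using qpos[OF that] by (simp add: q_def)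
  have Bpos: "Bf u > 0" if "u \<in> U" for u
    using fB_pos[OF off[OF that]] by (simp add: Bf_def fB_def q_def Q_def Z_def fq_def power2_eq_square)
  have cfst: "Ck k (\<lambda>u. fst (\<phi> u)) U" by (rule Ck_linear[OF U bounded_linear_fst phi])
  have crfst: "Ck k (\<lambda>u. r *v fst (\<phi> u)) U"
    by (rule Ck_linear[OF U bounded_linear_compose[OF matrix_vector_mul_bounded_linear bounded_linear_fst] phi])
  have cQ: "Ck k Q U" unfolding Q_def by (rule Ck_inner[OF U cfst crfst])
  have cq: "Ck k q U" unfolding q_def by (rule Ck_sqrt[OF U Qpos cQ])
  have cZ: "Ck k Z U" unfolding Z_def by (rule Ck_linear[OF U bounded_linear_snd phi])
  have cB: "Ck k Bf U" unfolding Bf_def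
    by (intro Ck_add[OF U] Ck_mult[OF U] cZ cq Ck_const)
  have cA: "Ck k Af U" unfolding Af_def
    by (intro Ck_add[OF U] cZ Ck_linear[OF U bounded_linear_divide] Ck_mult[OF U] Ck_const cq)
  have csB: "Ck k (\<lambda>u. sqrt (Bf u)) U" by (rule Ck_sqrt[OF U Bpos cB])
  have ci1: "Ck k (\<lambda>u. inverse (sqrt (Bf u))) U"
    by (rule Ck_inverse[OF U _ csB]) (use Bpos in force)
  have ci2: "Ck k (\<lambda>u. inverse (fh g * sqrt (Bf u))) U"
    apply (rule Ck_inverse[OF U _ Ck_mult[OF U Ck_const csB]])
    using Bpos fh_pos[OF g1 g2] by force
  have c: "Ck k (\<lambda>u. (inverse (sqrt (Bf u)) *\<^sub>R fst (\<phi> u), Af u * inverse (fh g * sqrt (Bf u)))) U"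
    by (rule Ck_pair[OF U Ck_scaleR[OF U ci1 cfst] Ck_mult[OF U cA ci2]])
  have e: "sig g r (\<phi> u) = (inverse (sqrt (Bf u)) *\<^sub>R fst (\<phi> u), Af u * inverse (fh g * sqrt (Bf u)))" for u
    by (simp add: sig_def Bf_def Af_def fB_def fA_def q_def Q_def Z_def fq_def power2_eq_square inverse_eq_divide)
  show ?thesis unfolding e by (rule c)
qed

end

theorem theorem2p4:
  fixes g :: real and r :: "real^'m^'m"
    and \<phi> :: "real^'m \<Rightarrow> (real^'m) \<times> real" and U :: "(real^'m) set"
  assumes g_range: "-2 < g" "g < 2"
    and r_sym: "transpose r = r"
    and r_pos: "\<And>x. x \<noteq> 0 \<Longrightarrow> x \<bullet> (r *v x) > 0"
    and U_open: "open U"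
    and \<phi>_smooth: "smooth_on \<phi> U"
    and \<phi>_immersion: "\<And>u c. u \<in> U \<Longrightarrow> (\<Sum>i\<in>UNIV. c i *\<^sub>R pd \<phi> i u) = 0 \<Longrightarrow> (\<forall>i. c i = 0)"
    and \<phi>_indicatrix: "\<And>u. u \<in> U \<Longrightarrow> fK g r (\<phi> u) = 1"
    and \<phi>_off_axis: "\<And>u. u \<in> U \<Longrightarrow> fq r (\<phi> u) > 0"
  shows "(\<forall>u\<in>U. \<forall>i j k l.
            riem g r \<phi> i j k l u =
              (- quad_disc 1 g 1 / 4) *
                (ind_metric g r \<phi> u $ i $ k * ind_metric g r \<phi> u $ j $ l
                 - ind_metric g r \<phi> u $ i $ l * ind_metric g r \<phi> u $ j $ k))
         \<and> - quad_disc 1 g 1 / 4 = 1 - g^2 / 4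
         \<and> 1 - g^2 / 4 = (fh g)^2"
proof -
  interpret F: fins g r using g_range r_sym r_pos by (unfold_locales) auto
  define \<psi> where "\<psi> v = sig g r (\<phi> v)" for v
  have phiCk: "\<And>k. Ck k \<phi> U" using \<phi>_smooth by (rule smooth_Ck)
  have phi1: "Ck (Suc 0) \<phi> U" by (rule phiCk)
  have hp: "fh g > 0" by (rule fh_pos[OF g_range])
  have pdpsi: "pd \<psi> i u = Dsig g r (\<phi> u) (pd \<phi> i u)" if "u \<in> U" for i u
    unfolding \<psi>_def by (rule F.pd_psi[OF U_open phi1 that \<phi>_indicatrix \<phi>_off_axis])
  have tg: "fst (\<phi> u) \<bullet> (r *v fst (pd \<phi> i u)) + (snd (\<phi> u) + g * fq r (\<phi> u)) * snd (pd \<phi> i u) = 0"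
    if "u \<in> U" for i u by (rule F.tangent_pd[OF U_open phi1 that \<phi>_indicatrix \<phi>_off_axis])
  have a1: "Ck 3 \<psi> U" unfolding \<psi>_def by (rule F.psi_Ck[OF U_open phiCk \<phi>_off_axis])
  have a2: "\<And>x y. bb r x y = bb r y x" by (rule F.bb_sym)
  have a3: "\<And>x. x \<noteq> 0 \<Longrightarrow> 0 < bb r x x" by (rule F.bb_pos)
  have a4: "0 < 1 / (fh g)\<^sup>2" using hp by simp
  have a5: "\<And>u. u \<in> U \<Longrightarrow> bb r (\<psi> u) (\<psi> u) = 1 / (fh g)\<^sup>2"
    unfolding \<psi>_def by (rule F.sig_const[OF \<phi>_off_axis])
  have a6: "\<forall>i. a i = 0" if u: "u \<in> U" and s: "(\<Sum>i\<in>UNIV. a i *\<^sub>R pd \<psi> i u) = 0" for u a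
  proof -
    have lin: "linear (Dsig g r (\<phi> u))" by (rule F.Dsig_linear)
    have "Dsig g r (\<phi> u) (\<Sum>i\<in>UNIV. a i *\<^sub>R pd \<phi> i u) = (\<Sum>i\<in>UNIV. a i *\<^sub>R pd \<psi> i u)"
      by (simp add: linear_sum[OF lin] linear_cmul[OF lin] pdpsi[OF u])
    then have "Dsig g r (\<phi> u) (\<Sum>i\<in>UNIV. a i *\<^sub>R pd \<phi> i u) = 0" using s by simp
    then have "(\<Sum>i\<in>UNIV. a i *\<^sub>R pd \<phi> i u) = 0" by (rule F.Dsig_inj[OF \<phi>_off_axis[OF u]])
    then show ?thesis by (rule \<phi>_immersion[OF u])
  qed
  have a7: "ind_metric g r \<phi> u = (\<chi> i j. bb r (pd \<psi> i u) (pd \<psi> j u))" if u: "u \<in> U" for u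
    unfolding ind_metric_def vec_eq_iff
    by (simp add: pdpsi[OF u] F.metric_id[OF \<phi>_off_axis[OF u] \<phi>_indicatrix[OF u] tg[OF u] tg[OF u]])
  have GS: "gauss_setup U \<psi> (bb r) (1 / (fh g)\<^sup>2) (ind_metric g r \<phi>)"
    by (rule gauss_setup.intro[OF U_open a1 F.bb_bil a2 a3 a4 a5 a6 a7])
  interpret G: gauss_setup U \<psi> "bb r" "1 / (fh g)\<^sup>2" "ind_metric g r \<phi>" by (rule GS)
  have hh: "(fh g)\<^sup>2 = 1 - g\<^sup>2 / 4" by (rule fh_sq[OF g_range])
  have qd: "- quad_disc 1 g 1 / 4 = 1 - g^2 / 4" by (simp add: quad_disc_def)
  have "riem g r \<phi> i j k l u =
          (- quad_disc 1 g 1 / 4) *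
            (ind_metric g r \<phi> u $ i $ k * ind_metric g r \<phi> u $ j $ l
             - ind_metric g r \<phi> u $ i $ l * ind_metric g r \<phi> u $ j $ k)" if u: "u \<in> U" for u i j k l
    unfolding riem_eq_riemG G.riem_main[OF u] qd hh[symmetric] by simp
  then have main: "\<forall>u\<in>U. \<forall>i j k l. riem g r \<phi> i j k l u =
          (- quad_disc 1 g 1 / 4) *
            (ind_metric g r \<phi> u $ i $ k * ind_metric g r \<phi> u $ j $ l
             - ind_metric g r \<phi> u $ i $ l * ind_metric g r \<phi> u $ j $ k)" by blast
  show ?thesis using main qd hh[symmetric] by (intro conjI)
qed

end
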